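(* For every graph $H$ on the $7$ vertices of $K_7$ with $|E(H)|\le4$, we have $q(K_7\setminus H)=2$.
   Context: $K_n\setminus H$ denotes the graph obtained from the complete graph $K_n$ by deleting the edges of $H$, where $H$ is a graph on the same $n$ vertices. For a graph $G$ on $n$ vertices, $S(G)$ is the set of real symmetric $n\times n$ matrices $A$ with $a_{ij}\ne0$ ($i\ne j$) iff $ij\in E(G)$, diagonal unrestricted, and $q(G)$ is the minimum number of distinct eigenvalues of a matrix in $S(G)$. *)

theory Defs
  imports "HOL-Analysis.Analysis"
begin

text \<open>A simple graph on the vertex type 'n is given by its edge set: a set of
  2-element subsets of the vertex set.\<close>

definition simple_edges :: "('n set) set" where
  "simple_edges = {{i, j} | i j. i \<noteq> j}"

definition complete_minus :: "('n set) set \<Rightarrow> ('n set) set" where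
  "complete_minus H = simple_edges - H"

definition S_graph :: "('n::finite set) set \<Rightarrow> (real^'n^'n) set" where
  "S_graph E = {A. transpose A = A \<and>
      (\<forall>i j. i \<noteq> j \<longrightarrow> (A $ i $ j \<noteq> 0 \<longleftrightarrow> {i, j} \<in> E))}"

definition eigenvalues :: "real^'n^'n \<Rightarrow> real set" where
  "eigenvalues A = {c. \<exists>v. v \<noteq> 0 \<and> A *v v = c *\<^sub>R v}"

definition q_graph :: "('n::finite set) set \<Rightarrow> nat" where
  "q_graph E = (LEAST k. \<exists>A \<in> S_graph E. card (eigenvalues A) = k)"

end

theory Submission
  imports Defs
begin


lemma symdot:
  fixes A :: "real^'n^'n"
  assumes "transpose A = A"
  shows "x \<bullet> (A *v y) = (A *v x) \<bullet> y"
proof -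
  have "x \<bullet> (A *v y) = (x v* A) \<bullet> y" by (simp add: dot_lmul_matrix)
  also have "x v* A = transpose A *v x"
    by (simp add: transpose_matrix_vector)
  finally show ?thesis using assms by simp
qed

lemma eig_max:
  fixes A :: "real^'n^'n"
  assumes sym: "transpose A = A"
  shows "\<exists>l x. x \<noteq> 0 \<and> A *v x = l *\<^sub>R x \<and> (\<forall>y. y \<bullet> (A *v y) \<le> l * (y \<bullet> y))"
proof -
  let ?f = "\<lambda>x. x \<bullet> (A *v x)"
  have cont: "continuous_on (sphere 0 1) ?f"
    by (intro continuous_intros linear_continuous_on linear_linear[THEN iffD1] matrix_vector_mul_linear)
  have ne: "sphere (0::real^'n) 1 \<noteq> {}" by simp
  obtain x0 where x0: "x0 \<in> sphere 0 1" and mx: "\<And>y. y \<in> sphere 0 1 \<Longrightarrow> ?f y \<le> ?f x0"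
    using continuous_attains_sup[OF compact_sphere ne cont] by blast
  define l where "l = ?f x0"
  have nx0: "norm x0 = 1" using x0 by simp
  have x0x0: "x0 \<bullet> x0 = 1" using nx0 by (simp add: dot_square_norm)
  have bound: "y \<bullet> (A *v y) \<le> l * (y \<bullet> y)" for y
  proof (cases "y = 0")
    case True then show ?thesis by simp
  next
    case False
    define z where "z = (1 / norm y) *\<^sub>R y"
    have "z \<in> sphere 0 1" using False by (simp add: z_def)
    then have "?f z \<le> l" using mx l_def by blast
    moreover have "?f z = ?f y / (norm y)^2"
      by (simp add: z_def matrix_vector_mult_scaleR power2_eq_square)
    moreover have "y \<bullet> y = (norm y)^2" by (simp add: dot_square_norm)
    moreover have "norm y > 0" using False by simp
    ultimately show ?thesis by (simp add: divide_le_eq mult.commute)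
  qed
  define d where "d = l *\<^sub>R x0 - A *v x0"
  define Q where "Q = (\<lambda>y. l * (y \<bullet> y) - y \<bullet> (A *v y))"
  have Qnn: "Q y \<ge> 0" for y using bound[of y] by (simp add: Q_def)
  have Qx0: "Q x0 = 0" by (simp add: Q_def l_def x0x0)
  have exp: "Q (x0 + t *\<^sub>R d) = 2 * t * (d \<bullet> d) + t^2 * Q d" for t
  proof -
    have s: "x0 \<bullet> (A *v d) = (A *v x0) \<bullet> d" by (rule symdot[OF sym])
    have "Q (x0 + t *\<^sub>R d) = Q x0 + 2 * t * (l * (x0 \<bullet> d) - (A *v x0) \<bullet> d) + t^2 * Q d"
      unfolding Q_def using s
      by (simp add: matrix_vector_right_distrib matrix_vector_mult_scaleR inner_add_left inner_add_right
          inner_commute algebra_simps power2_eq_square)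
    also have "l * (x0 \<bullet> d) - (A *v x0) \<bullet> d = d \<bullet> d"
      by (simp add: d_def inner_diff_left inner_commute)
    finally show ?thesis using Qx0 by simp
  qed
  have "d = 0"
  proof (rule ccontr)
    assume "d \<noteq> 0"
    define s where "s = d \<bullet> d"
    have s: "s > 0" using \<open>d \<noteq> 0\<close> by (simp add: s_def)
    show False
    proof (cases "Q d = 0")
      case True
      have "Q (x0 + (-1) *\<^sub>R d) = - 2 * s" using exp[of "-1"] True by (simp add: s_def)
      then show False using Qnn[of "x0 + (-1) *\<^sub>R d"] s by linarith
    next
      case False
      define q where "q = Q d"
      then have q: "q > 0" using Qnn[of d] False by simp
      have "Q (x0 + (- s / q) *\<^sub>R d) \<ge> 0" by (rule Qnn)
      moreover have "2 * (- s / q) * s + (- s / q)^2 * q = - (s * s) / q"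
        using q by (simp add: field_simps power2_eq_square)
      moreover have "- (s * s) / q < 0" using q s by simp
      ultimately show False using exp[of "- s / q"] by (simp add: s_def q_def)
    qed
  qed
  then have "A *v x0 = l *\<^sub>R x0" by (simp add: d_def)
  moreover have "x0 \<noteq> 0" using nx0 by auto
  ultimately show ?thesis using bound by blast
qed

lemma eig_finite:
  fixes A :: "real^'n^'n"
  assumes sym: "transpose A = A"
  shows "finite (eigenvalues A)"
proof -
  define v where "v = (\<lambda>c. SOME x. x \<noteq> 0 \<and> A *v x = c *\<^sub>R x)"
  have v: "v c \<noteq> 0 \<and> A *v v c = c *\<^sub>R v c" if "c \<in> eigenvalues A" for c
  proof -
    have "\<exists>x. x \<noteq> 0 \<and> A *v x = c *\<^sub>R x" using that unfolding eigenvalues_def by simp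
    then show ?thesis unfolding v_def by (rule someI_ex)
  qed
  have orth: "v c \<bullet> v d = 0" if "c \<in> eigenvalues A" "d \<in> eigenvalues A" "c \<noteq> d" for c d
  proof -
    have "c * (v c \<bullet> v d) = (A *v v c) \<bullet> v d" using v[OF that(1)] by simp
    also have "\<dots> = v c \<bullet> (A *v v d)" using symdot[OF sym] by simp
    also have "\<dots> = d * (v c \<bullet> v d)" using v[OF that(2)] by simp
    finally show ?thesis using that(3) by simp
  qed
  have inj: "inj_on v (eigenvalues A)"
  proof (rule inj_onI)
    fix c d assume cd: "c \<in> eigenvalues A" "d \<in> eigenvalues A" "v c = v d"
    show "c = d"
    proof (rule ccontr)
      assume "c \<noteq> d"
      then have "v c \<bullet> v d = 0" by (rule orth[OF cd(1) cd(2)])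
      then have "v d \<bullet> v d = 0" using cd(3) by simp
      then show False using v[OF cd(2)] by simp
    qed
  qed
  have "pairwise orthogonal (v ` eigenvalues A)"
    unfolding pairwise_def orthogonal_def using orth by (metis imageE)
  then have "finite (v ` eigenvalues A)" by (rule pairwise_orthogonal_imp_finite)
  then show ?thesis using finite_imageD[OF _ inj] by blast
qed

lemma quad_axis:
  fixes A :: "real^'n^'n"
  shows "axis i 1 \<bullet> (A *v axis j 1) = A $ i $ j"
  by (simp add: matrix_vector_mult_basis inner_axis' column_def)

lemma two_eig_lb:
  fixes A :: "real^'n^'n"
  assumes sym: "transpose A = A" and ij: "i \<noteq> j" "A $ i $ j \<noteq> 0"
  shows "2 \<le> card (eigenvalues A)"
proof -
  obtain l1 x1 where x1: "x1 \<noteq> 0" "A *v x1 = l1 *\<^sub>R x1" and b1: "\<And>y. y \<bullet> (A *v y) \<le> l1 * (y \<bullet> y)"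
    using eig_max[OF sym] by blast
  have symn: "transpose (-A) = -A" using sym by (simp add: transpose_def vec_eq_iff)
  obtain l2 x2 where x2: "x2 \<noteq> 0" "(-A) *v x2 = l2 *\<^sub>R x2" and b2: "\<And>y. y \<bullet> ((-A) *v y) \<le> l2 * (y \<bullet> y)"
    using eig_max[OF symn] by blast
  have negmv: "(-A) *v y = - (A *v y)" for y
    by (simp add: matrix_vector_mult_def vec_eq_iff sum_negf)
  have e1: "l1 \<in> eigenvalues A" using x1 unfolding eigenvalues_def by blast
  have "- (A *v x2) = l2 *\<^sub>R x2" using x2(2) negmv[of x2] by simp
  then have "A *v x2 = (-l2) *\<^sub>R x2" by (metis minus_minus scaleR_minus_left)
  then have e2: "-l2 \<in> eigenvalues A" using x2(1) unfolding eigenvalues_def by blast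
  have ne: "l1 \<noteq> -l2"
  proof
    assume eq: "l1 = -l2"
    have f: "y \<bullet> (A *v y) = l1 * (y \<bullet> y)" for y
      using b1[of y] b2[of y] eq by (simp add: negmv)
    let ?ei = "axis i (1::real)" and ?ej = "axis j (1::real)"
    have "(?ei + ?ej) \<bullet> (A *v (?ei + ?ej)) = A$i$i + A$i$j + A$j$i + A$j$j"
      by (simp add: matrix_vector_right_distrib inner_add_left inner_add_right quad_axis)
    moreover have "(?ei + ?ej) \<bullet> (?ei + ?ej) = 2"
      using ij(1) by (simp add: inner_add_left inner_add_right inner_axis_axis)
    moreover have "A$i$i = l1" using f[of ?ei] by (simp add: quad_axis inner_axis_axis)
    moreover have "A$j$j = l1" using f[of ?ej] by (simp add: quad_axis inner_axis_axis)
    moreover have "A$j$i = A$i$j"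
      by (metis sym transpose_def vec_lambda_beta)
    ultimately have "2 * A$i$j = 0" using f[of "?ei + ?ej"] by simp
    then show False using ij(2) by simp
  qed
  have "card {l1, -l2} \<le> card (eigenvalues A)"
    by (rule card_mono[OF eig_finite[OF sym]]) (use e1 e2 in auto)
  then show ?thesis using ne by simp
qed

definition good :: "('n::finite) set set \<Rightarrow> bool" where
  "good H \<longleftrightarrow> (\<exists>A\<in>S_graph (complete_minus H). card (eigenvalues A) = 2)"

lemma simple_edges_iff: "{i,j} \<in> simple_edges \<longleftrightarrow> i \<noteq> j"
  by (auto simp: simple_edges_def doubleton_eq_iff)

lemma S_cm: "A \<in> S_graph (complete_minus H) \<longleftrightarrow>
   transpose A = A \<and> (\<forall>i j. i \<noteq> j \<longrightarrow> (A$i$j \<noteq> 0 \<longleftrightarrow> {i,j} \<notin> H))"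
  by (auto simp: S_graph_def complete_minus_def simple_edges_iff)

lemma sum_bij: "bij p \<Longrightarrow> (\<Sum>k\<in>UNIV. g (p k)) = (\<Sum>k\<in>UNIV. g k)"
  by (rule sum.reindex_bij_betw) (simp add: bij_def)

lemma eig_perm:
  fixes A :: "real^'n^'n" and p :: "'n \<Rightarrow> 'n"
  assumes p: "bij p"
  shows "eigenvalues (\<chi> i j. A $ p i $ p j) = eigenvalues A"
proof
  let ?B = "(\<chi> i j. A $ p i $ p j) :: real^'n^'n"
  show "eigenvalues A \<subseteq> eigenvalues ?B"
  proof
    fix c assume "c \<in> eigenvalues A"
    then obtain v where v: "v \<noteq> 0" "A *v v = c *\<^sub>R v" unfolding eigenvalues_def by blast
    define v' :: "real^'n" where "v' = (\<chi> i. v $ p i)"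
    have "v' \<noteq> 0"
    proof
      assume "v' = 0"
      then have "v $ p k = 0" for k by (metis v'_def vec_lambda_beta zero_index)
      then have "v $ m = 0" for m using p by (metis bij_pointE)
      then show False using v(1) by (simp add: vec_eq_iff)
    qed
    moreover have "?B *v v' = c *\<^sub>R v'"
    proof -
      have "(?B *v v') $ i = c * v' $ i" for i
      proof -
        have "(?B *v v') $ i = (\<Sum>k\<in>UNIV. A $ p i $ p k * v $ p k)"
          by (simp add: matrix_vector_mult_def v'_def)
        also have "\<dots> = (\<Sum>k\<in>UNIV. A $ p i $ k * v $ k)"
          by (rule sum_bij[OF p, where g = "\<lambda>k. A $ p i $ k * v $ k"])
        also have "\<dots> = (A *v v) $ p i" by (simp add: matrix_vector_mult_def)
        also have "\<dots> = c * v' $ i" using v(2) by (simp add: v'_def)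
        finally show ?thesis .
      qed
      then show ?thesis by (simp add: vec_eq_iff)
    qed
    ultimately show "c \<in> eigenvalues ?B" unfolding eigenvalues_def by blast
  qed
next
  let ?B = "(\<chi> i j. A $ p i $ p j) :: real^'n^'n"
  show "eigenvalues ?B \<subseteq> eigenvalues A"
  proof
    fix c assume "c \<in> eigenvalues ?B"
    then obtain v where v: "v \<noteq> 0" "?B *v v = c *\<^sub>R v" unfolding eigenvalues_def by blast
    define q where "q = inv p"
    have qp: "q (p k) = k" for k using p by (simp add: q_def bij_is_inj)
    have pq: "p (q k) = k" for k using p by (simp add: q_def bij_is_surj surj_f_inv_f)
    define v' :: "real^'n" where "v' = (\<chi> m. v $ q m)"
    have "v' \<noteq> 0"
    proof
      assume "v' = 0"
      then have "v $ q m = 0" for m by (metis v'_def vec_lambda_beta zero_index)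
      then have "v $ k = 0" for k using qp by metis
      then show False using v(1) by (simp add: vec_eq_iff)
    qed
    moreover have "A *v v' = c *\<^sub>R v'"
    proof -
      have "(A *v v') $ m = c * v' $ m" for m
      proof -
        have "(A *v v') $ m = (\<Sum>k\<in>UNIV. A $ m $ k * v $ q k)"
          by (simp add: matrix_vector_mult_def v'_def)
        also have "\<dots> = (\<Sum>k\<in>UNIV. A $ m $ p k * v $ q (p k))"
          by (rule sum_bij[OF p, symmetric, where g = "\<lambda>k. A $ m $ k * v $ q k"])
        also have "\<dots> = (\<Sum>k\<in>UNIV. A $ p (q m) $ p k * v $ k)" by (simp add: qp pq)
        also have "\<dots> = (?B *v v) $ q m" by (simp add: matrix_vector_mult_def)
        also have "\<dots> = c * v' $ m" using v(2) by (simp add: v'_def)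
        finally show ?thesis .
      qed
      then show ?thesis by (simp add: vec_eq_iff)
    qed
    ultimately show "c \<in> eigenvalues A" unfolding eigenvalues_def by blast
  qed
qed

lemma inj_img: "inj p \<Longrightarrow> inj ((`) p)"
  by (rule injI) (simp add: inj_image_eq_iff)

lemma good_perm:
  fixes p :: "'n::finite \<Rightarrow> 'n"
  assumes p: "bij p" and g: "good ((`) p ` H)"
  shows "good H"
proof -
  obtain A where A: "A \<in> S_graph (complete_minus ((`) p ` H))" "card (eigenvalues A) = 2"
    using g unfolding good_def by blast
  define B :: "real^'n^'n" where "B = (\<chi> i j. A $ p i $ p j)"
  have inj: "inj p" using p by (simp add: bij_is_inj)
  have symA: "transpose A = A" and patA: "\<And>i j. i \<noteq> j \<Longrightarrow> (A$i$j \<noteq> 0 \<longleftrightarrow> {i,j} \<notin> (`) p ` H)"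
    using A(1) unfolding S_cm by auto
  have "transpose B = B"
  proof -
    have "A $ p j $ p i = A $ p i $ p j" for i j by (metis symA transpose_def vec_lambda_beta)
    then show ?thesis by (simp add: B_def transpose_def vec_eq_iff)
  qed
  moreover have "B$i$j \<noteq> 0 \<longleftrightarrow> {i,j} \<notin> H" if "i \<noteq> j" for i j
  proof -
    have "p i \<noteq> p j" using that inj by (simp add: inj_eq)
    then have "B$i$j \<noteq> 0 \<longleftrightarrow> {p i, p j} \<notin> (`) p ` H" using patA by (simp add: B_def)
    also have "{p i, p j} = p ` {i,j}" by simp
    also have "p ` {i,j} \<in> (`) p ` H \<longleftrightarrow> {i,j} \<in> H"
      by (rule inj_image_mem_iff[OF inj_img[OF inj]])
    finally show ?thesis by simp
  qed
  ultimately have "B \<in> S_graph (complete_minus H)" unfolding S_cm by blast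
  moreover have "card (eigenvalues B) = 2" using A(2) eig_perm[OF p] by (simp add: B_def)
  ultimately show ?thesis unfolding good_def by blast
qed



definition sw :: "'a \<Rightarrow> 'a \<Rightarrow> 'a \<Rightarrow> 'a" where
  "sw a b x = (if x = a then b else if x = b then a else x)"

lemma sw_sw: "sw a b (sw a b x) = x" by (simp add: sw_def)

lemma bij_sw: "bij (sw a b)"
  by (metis bij_betw_byWitness bij_def sw_sw subset_UNIV)

definition nd :: "nat \<Rightarrow> ('n::finite) set set \<Rightarrow> bool" where
  "nd m K \<longleftrightarrow> (\<forall>H. H \<subseteq> simple_edges \<longrightarrow> card H + m \<le> 4 \<longrightarrow> K \<inter> H = {} \<longrightarrow> good (K \<union> H))"

lemma nd_perm:
  fixes p :: "'n::finite \<Rightarrow> 'n"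
  assumes p: "bij p" and n: "nd m ((`) p ` L)"
  shows "nd m L"
  unfolding nd_def
proof (intro allI impI)
  fix H :: "'n set set"
  assume H: "H \<subseteq> simple_edges" "card H + m \<le> 4" "L \<inter> H = {}"
  have inj: "inj p" using p by (simp add: bij_is_inj)
  have ii: "inj ((`) p)" by (rule inj_img[OF inj])
  have "(`) p ` H \<subseteq> simple_edges"
  proof
    fix e assume "e \<in> (`) p ` H"
    then obtain f where f: "f \<in> H" "e = p ` f" by blast
    then obtain i j where "f = {i,j}" "i \<noteq> j" using H(1) unfolding simple_edges_def by blast
    then have "e = {p i, p j}" "p i \<noteq> p j" using f inj by (auto simp: inj_eq)
    then show "e \<in> simple_edges" by (simp add: simple_edges_iff)
  qed
  moreover have "card ((`) p ` H) = card H" by (rule card_image[OF inj_on_subset[OF ii]]) simp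
  moreover have "(`) p ` L \<inter> (`) p ` H = {}" using H(3) ii by (simp add: image_Int[symmetric])
  ultimately have "good ((`) p ` L \<union> (`) p ` H)" using n H(2) unfolding nd_def by auto
  then have "good ((`) p ` (L \<union> H))" by (simp add: image_Un)
  then show "good (L \<union> H)" by (rule good_perm[OF p])
qed

lemma nd_leaf:
  fixes K :: "('n::finite) set set"
  assumes "good K" shows "nd 4 K"
  unfolding nd_def
proof (intro allI impI)
  fix H :: "'n set set"
  assume "card H + 4 \<le> 4"
  then have "H = {}" by (simp add: card_eq_0_iff)
  then show "good (K \<union> H)" using assms by simp
qed

lemma nd_intro:
  fixes K :: "('n::finite) set set"
  assumes g: "good K"
    and step: "\<And>a b. a \<noteq> b \<Longrightarrow> {a,b} \<notin> K \<Longrightarrow> nd (Suc m) (insert {a,b} K)"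
  shows "nd m K"
  unfolding nd_def
proof (intro allI impI)
  fix H :: "'n set set"
  assume H: "H \<subseteq> simple_edges" "card H + m \<le> 4" "K \<inter> H = {}"
  show "good (K \<union> H)"
  proof (cases "H = {}")
    case True then show ?thesis using g by simp
  next
    case False
    then obtain e where e: "e \<in> H" by blast
    then obtain a b where ab: "e = {a,b}" "a \<noteq> b" using H(1) unfolding simple_edges_def by blast
    have "{a,b} \<notin> K" using H(3) e ab by blast
    then have n: "nd (Suc m) (insert e K)" using step[OF ab(2)] ab(1) by simp
    have fH: "finite H" by simp
    have "card H > 0" using e fH card_gt_0_iff by blast
    moreover have "card (H - {e}) = card H - 1" using e fH by (simp add: card_Diff_singleton)
    ultimately have c: "card (H - {e}) + Suc m \<le> 4" using H(2) by simp
    have d1: "H - {e} \<subseteq> simple_edges" using H(1) by blast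
    have d2: "insert e K \<inter> (H - {e}) = {}" using H(3) by blast
    have "good (insert e K \<union> (H - {e}))"
      using n[unfolded nd_def, rule_format, OF d1 c d2] .
    moreover have "insert e K \<union> (H - {e}) = K \<union> H" using e by blast
    ultimately show ?thesis by simp
  qed
qed

lemma nd_new1:
  fixes K :: "('n::finite) set set"
  assumes KV: "\<forall>e\<in>K. e \<subseteq> V" and x: "x \<in> V" and b: "b \<notin> V" and r: "r \<notin> V"
    and n: "nd m (insert {x,r} K)"
  shows "nd m (insert {x,b} K)"
proof (rule nd_perm[OF bij_sw[of b r]])
  have fix_: "sw b r y = y" if "y \<in> V" for y using that b r by (auto simp: sw_def)
  have "(`) (sw b r) ` K = K"
  proof -
    have "sw b r ` e = e" if "e \<in> K" for e
    proof -
      have "e \<subseteq> V" using KV that by blast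
      then have "\<And>y. y \<in> e \<Longrightarrow> sw b r y = y" using fix_ by blast
      then show ?thesis by simp
    qed
    then show ?thesis by simp
  qed
  moreover have "sw b r ` {x,b} = {x,r}"
  proof -
    have "sw b r b = r" by (simp add: sw_def)
    then show ?thesis using fix_[OF x] by simp
  qed
  ultimately show "nd m ((`) (sw b r) ` insert {x,b} K)" using n by simp
qed

lemma nd_new2:
  fixes K :: "('n::finite) set set"
  assumes KV: "\<forall>e\<in>K. e \<subseteq> V" and a: "a \<notin> V" and b: "b \<notin> V" and ab: "a \<noteq> b"
    and r: "r \<notin> V" and s: "s \<notin> V" and rs: "r \<noteq> s"
    and n: "nd m (insert {r,s} K)"
  shows "nd m (insert {a,b} K)"
proof (cases "b = r")
  case True
  have KV': "\<forall>e\<in>K. e \<subseteq> insert r V" using KV by blast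
  have "nd m (insert {r,a} K)"
    by (rule nd_new1[OF KV' _ _ _ n]) (use a ab True s rs in auto)
  then show ?thesis using True by (simp add: insert_commute)
next
  case False
  have KV': "\<forall>e\<in>K. e \<subseteq> insert r V" using KV by blast
  have "nd m (insert {r,b} K)"
    by (rule nd_new1[OF KV' _ _ _ n]) (use b False s rs in auto)
  then have n2: "nd m (insert {b,r} K)" by (simp add: insert_commute)
  have KV'': "\<forall>e\<in>K. e \<subseteq> insert b V" using KV by blast
  have "nd m (insert {b,a} K)"
    by (rule nd_new1[OF KV'' _ _ _ n2]) (use a ab r False in auto)
  then show ?thesis by (simp add: insert_commute)
qed



lemma weighted_good:
  fixes u :: "'n::finite \<Rightarrow> nat \<Rightarrow> real" and w :: "'n \<Rightarrow> real" and H :: "'n set set"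
  assumes w: "\<forall>i. w i > 0" and c: "c \<noteq> 0"
   and tight: "\<forall>a<k. \<forall>b<k. (\<Sum>i\<in>UNIV. w i * u i a * u i b) = (if a = b then c else 0)"
   and pat: "\<forall>i j. i \<noteq> j \<longrightarrow> ((\<Sum>a<k. u i a * u j a) \<noteq> 0 \<longleftrightarrow> {i,j} \<notin> H)"
   and edge: "\<exists>i j. i \<noteq> j \<and> {i,j} \<notin> H"
  shows "good H"
proof -
  define G where "G i j = (\<Sum>a<k. u i a * u j a)" for i j
  define A :: "real^'n^'n" where "A = (\<chi> i j. sqrt (w i) * G i j * sqrt (w j))"
  have GWG: "(\<Sum>l\<in>UNIV. G i l * w l * G l j) = c * G i j" for i j
  proof -
    have "(\<Sum>l\<in>UNIV. G i l * w l * G l j) = (\<Sum>l\<in>UNIV. \<Sum>a<k. \<Sum>b<k. u i a * u j b * (w l * u l a * u l b))"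
      by (simp add: G_def sum_product sum_distrib_left sum_distrib_right mult_ac)
    also have "\<dots> = (\<Sum>a<k. \<Sum>l\<in>UNIV. \<Sum>b<k. u i a * u j b * (w l * u l a * u l b))"
      by (rule sum.swap)
    also have "\<dots> = (\<Sum>a<k. \<Sum>b<k. \<Sum>l\<in>UNIV. u i a * u j b * (w l * u l a * u l b))"
      by (simp add: sum.swap[of _ UNIV])
    also have "\<dots> = (\<Sum>a<k. \<Sum>b<k. u i a * u j b * (\<Sum>l\<in>UNIV. w l * u l a * u l b))"
      by (simp add: sum_distrib_left)
    also have "\<dots> = (\<Sum>a<k. \<Sum>b<k. u i a * u j b * (if a = b then c else 0))"
      using tight by (intro sum.cong refl) simp
    also have "\<dots> = (\<Sum>a<k. u i a * u j a * c)"
      by (simp add: if_distrib cong: if_cong)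
    also have "\<dots> = c * G i j" by (simp add: G_def sum_distrib_left mult_ac)
    finally show ?thesis .
  qed
  have sq: "sqrt (w l) * sqrt (w l) = w l" for l using w by (simp add: less_imp_le)
  have AA: "(\<Sum>l\<in>UNIV. A$i$l * A$l$j) = c * A$i$j" for i j
  proof -
    have "(\<Sum>l\<in>UNIV. A$i$l * A$l$j) = (\<Sum>l\<in>UNIV. sqrt (w i) * sqrt (w j) * (G i l * (sqrt (w l) * sqrt (w l)) * G l j))"
      by (simp add: A_def mult_ac del: real_sqrt_mult_self)
    also have "\<dots> = sqrt (w i) * sqrt (w j) * (\<Sum>l\<in>UNIV. G i l * w l * G l j)"
      using w by (simp add: sum_distrib_left abs_of_pos)
    also have "\<dots> = c * A$i$j" unfolding GWG by (simp add: A_def mult_ac)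
    finally show ?thesis .
  qed
  have Gsym: "G i j = G j i" for i j by (simp add: G_def mult.commute)
  have Apat: "A$i$j \<noteq> 0 \<longleftrightarrow> G i j \<noteq> 0" for i j
    using w by (simp add: A_def) (metis less_irrefl real_sqrt_eq_zero_cancel_iff)
  have symA: "transpose A = A"
    by (simp add: A_def transpose_def vec_eq_iff Gsym mult_ac)
  have SA: "A \<in> S_graph (complete_minus H)"
    unfolding S_cm using symA pat Apat by (simp add: G_def)
  obtain i j where ij: "i \<noteq> j" "{i,j} \<notin> H" using edge by blast
  have Aij: "A$i$j \<noteq> 0" using pat ij Apat by (simp add: G_def)
  have "eigenvalues A = {0, c}"
  proof
    show "eigenvalues A \<subseteq> {0, c}"
    proof
      fix l assume "l \<in> eigenvalues A"
      then obtain v where v: "v \<noteq> 0" "A *v v = l *\<^sub>R v" unfolding eigenvalues_def by blast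
      have AAm: "A ** A = c *\<^sub>R A" by (simp add: vec_eq_iff matrix_matrix_mult_def AA)
      have "A *v (A *v v) = (l * l) *\<^sub>R v" using v(2) by (simp add: matrix_vector_mult_scaleR)
      moreover have "A *v (A *v v) = (c * l) *\<^sub>R v"
      proof -
        have "A *v (A *v v) = (A ** A) *v v" by (simp add: matrix_vector_mul_assoc)
        also have "\<dots> = (c *\<^sub>R A) *v v" by (simp add: AAm)
        also have "\<dots> = c *\<^sub>R (A *v v)" by (simp add: scaleR_matrix_vector_assoc)
        also have "\<dots> = (c * l) *\<^sub>R v" by (simp add: v(2))
        finally show ?thesis .
      qed
      ultimately have "(l * l) *\<^sub>R v = (c * l) *\<^sub>R v" by metis
      then have "l * l = c * l" using v(1) by (simp add: scaleR_cancel_right)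
      then have "l = 0 \<or> l = c" by (metis mult_right_cancel)
      then show "l \<in> {0, c}" by simp
    qed
  next
    define v :: "real^'n" where "v = (\<chi> m. A$m$j)"
    have "A *v v = c *\<^sub>R v" by (simp add: vec_eq_iff matrix_vector_mult_def v_def AA)
    moreover have "v \<noteq> 0"
    proof -
      have "v $ i \<noteq> 0" using Aij by (simp add: v_def)
      then show ?thesis by auto
    qed
    ultimately have ec: "c \<in> eigenvalues A" unfolding eigenvalues_def by blast
    define z :: "real^'n" where "z = (\<chi> m. A$m$j - (if m = j then c else 0))"
    have "(A *v z) $ m = 0" for m
    proof -
      have "(A *v z) $ m = (\<Sum>l\<in>UNIV. A$m$l * A$l$j) - (\<Sum>l\<in>UNIV. A$m$l * (if l = j then c else 0))"
        by (simp add: matrix_vector_mult_def z_def right_diff_distrib sum_subtractf)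
      also have "\<dots> = 0" by (simp add: AA if_distrib cong: if_cong)
      finally show ?thesis .
    qed
    then have "A *v z = 0 *\<^sub>R z" by (simp add: vec_eq_iff)
    moreover have "z \<noteq> 0"
    proof -
      have "z $ i \<noteq> 0" using Aij ij(1) by (simp add: z_def)
      then show ?thesis by auto
    qed
    ultimately have e0: "0 \<in> eigenvalues A" unfolding eigenvalues_def by blast
    show "{0, c} \<subseteq> eigenvalues A" using ec e0 by simp
  qed
  then have "card (eigenvalues A) = 2" using c by simp
  then show ?thesis unfolding good_def using SA by blast
qed



lemma U7: "(x::7) = 0 \<or> x = 1 \<or> x = 2 \<or> x = 3 \<or> x = 4 \<or> x = 5 \<or> x = 6"
proof (cases x)
  case (of_int z)
  then have "z = 0 \<or> z = 1 \<or> z = 2 \<or> z = 3 \<or> z = 4 \<or> z = 5 \<or> z = 6" by auto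
  then show ?thesis using of_int by auto
qed
lemma UNIV7: "(UNIV::7 set) = {0,1,2,3,4,5,6}" using U7 by auto
lemma all7: "(\<forall>i::7. P i) \<longleftrightarrow> P 0 \<and> P 1 \<and> P 2 \<and> P 3 \<and> P 4 \<and> P 5 \<and> P 6"
proof
  assume "\<forall>i. P i" then show "P 0 \<and> P 1 \<and> P 2 \<and> P 3 \<and> P 4 \<and> P 5 \<and> P 6" by blast
next
  assume H: "P 0 \<and> P 1 \<and> P 2 \<and> P 3 \<and> P 4 \<and> P 5 \<and> P 6"
  show "\<forall>i. P i"
  proof
    fix i :: 7 show "P i" using U7[of i] H by (elim disjE) simp_all
  qed
qed
definition sel7 :: "7 \<Rightarrow> 'a \<Rightarrow> 'a \<Rightarrow> 'a \<Rightarrow> 'a \<Rightarrow> 'a \<Rightarrow> 'a \<Rightarrow> 'a \<Rightarrow> 'a" where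
  "sel7 i a0 a1 a2 a3 a4 a5 a6 = (if i = 0 then a0 else if i = 1 then a1 else if i = 2 then a2
     else if i = 3 then a3 else if i = 4 then a4 else if i = 5 then a5 else a6)"
lemma sel7_simps[simp]:
  "sel7 0 a0 a1 a2 a3 a4 a5 a6 = a0" "sel7 1 a0 a1 a2 a3 a4 a5 a6 = a1"
  "sel7 2 a0 a1 a2 a3 a4 a5 a6 = a2" "sel7 3 a0 a1 a2 a3 a4 a5 a6 = a3"
  "sel7 4 a0 a1 a2 a3 a4 a5 a6 = a4" "sel7 5 a0 a1 a2 a3 a4 a5 a6 = a5"
  "sel7 6 a0 a1 a2 a3 a4 a5 a6 = a6"
  by (simp_all add: sel7_def)
lemma all_lt1: "(\<forall>a<(1::nat). P a) \<longleftrightarrow> P 0" by auto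
lemma lt2: "a < (2::nat) \<longleftrightarrow> a = 0 \<or> a = 1" by arith
lemma lt3: "a < (3::nat) \<longleftrightarrow> a = 0 \<or> a = 1 \<or> a = 2" by arith
lemma all_lt2: "(\<forall>a<(2::nat). P a) \<longleftrightarrow> P 0 \<and> P 1" unfolding lt2 by blast
lemma all_lt3: "(\<forall>a<(3::nat). P a) \<longleftrightarrow> P 0 \<and> P 1 \<and> P 2" unfolding lt3 by blast
lemma sum_lt1: "(\<Sum>a<(1::nat). f a) = (f 0::real)" by simp
lemma sum_lt2: "(\<Sum>a<(2::nat). f a) = (f 0 + f 1::real)" by (simp add: numeral_2_eq_2)
lemma sum_lt3: "(\<Sum>a<(3::nat). f a) = (f 0 + f 1 + f 2::real)" by (simp add: numeral_3_eq_3 numeral_2_eq_2)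
lemma sum7: "(\<Sum>i\<in>(UNIV::7 set). f i) = (f 0 + f 1 + f 2 + f 3 + f 4 + f 5 + f 6 :: real)"
proof -
  have "sum f {0::7,1,2,3,4,5,6} = f 0 + f 1 + f 2 + f 3 + f 4 + f 5 + f 6" by (simp add: add.assoc)
  then show ?thesis unfolding UNIV7 .
qed

lemmas csimps = all7 all_lt1 all_lt2 all_lt3 sum_lt1 sum_lt2 sum_lt3 sum7 doubleton_eq_iff



lemma nd_intro_0:
  fixes K :: "('n::finite) set set"
  assumes "good K" "\<And>a b. a \<noteq> b \<Longrightarrow> {a,b} \<notin> K \<Longrightarrow> nd 1 (insert {a,b} K)" shows "nd 0 K"
proof - have e: "Suc 0 = 1" by simp show ?thesis using nd_intro[of K 0] assms unfolding e by blast qed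
lemma nd_intro_1:
  fixes K :: "('n::finite) set set"
  assumes "good K" "\<And>a b. a \<noteq> b \<Longrightarrow> {a,b} \<notin> K \<Longrightarrow> nd 2 (insert {a,b} K)" shows "nd 1 K"
proof - have e: "Suc 1 = 2" by simp show ?thesis using nd_intro[of K 1] assms unfolding e by blast qed
lemma nd_intro_2:
  fixes K :: "('n::finite) set set"
  assumes "good K" "\<And>a b. a \<noteq> b \<Longrightarrow> {a,b} \<notin> K \<Longrightarrow> nd 3 (insert {a,b} K)" shows "nd 2 K"
proof - have e: "Suc 2 = 3" by simp show ?thesis using nd_intro[of K 2] assms unfolding e by blast qed
lemma nd_intro_3:
  fixes K :: "('n::finite) set set"
  assumes "good K" "\<And>a b. a \<noteq> b \<Longrightarrow> {a,b} \<notin> K \<Longrightarrow> nd 4 (insert {a,b} K)" shows "nd 3 K"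
proof - have e: "Suc 3 = 4" by simp show ?thesis using nd_intro[of K 3] assms unfolding e by blast qed

lemma bij_sel7:
  assumes "\<forall>x::7. sel7 (sel7 x p0 p1 p2 p3 p4 p5 p6) q0 q1 q2 q3 q4 q5 q6 = x"
  shows "bij (\<lambda>x. sel7 x p0 p1 p2 p3 p4 p5 p6)"
proof -
  have "inj (\<lambda>x. sel7 x p0 p1 p2 p3 p4 p5 p6)"
    by (rule inj_on_inverseI[where g = "\<lambda>x. sel7 x q0 q1 q2 q3 q4 q5 q6"]) (use assms in auto)
  moreover have "surj (\<lambda>x. sel7 x p0 p1 p2 p3 p4 p5 p6)"
    using finite_UNIV_inj_surj[OF _ calculation] by simp
  ultimately show ?thesis by (simp add: bij_def)
qed

definition "u0 = (\<lambda>(i::7) a. sel7 i [1] [1] [1] [1] [1] [1] [1] ! a :: real)"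
definition "w0 = (\<lambda>i::7. sel7 i 1 1 1 1 1 1 1 :: real)"
lemma good0: "good ({}::7 set set)"
proof (rule weighted_good[where k=1 and c="7" and u=u0 and w=w0])
  show "\<forall>i. 0 < w0 i" by (simp add: all7 w0_def)
  show "\<forall>a<1. \<forall>b<1. (\<Sum>i\<in>UNIV. w0 i * u0 i a * u0 i b) = (if a = b then 7 else 0)"
    by (simp add: csimps u0_def w0_def)
  show "\<forall>i j. i \<noteq> j \<longrightarrow> ((\<Sum>a<1. u0 i a * u0 j a) \<noteq> 0 \<longleftrightarrow> {i,j} \<notin> ({}::7 set set))"
    unfolding all7 by (simp add: csimps u0_def)
  show "\<exists>i j. i \<noteq> j \<and> {i,j} \<notin> ({}::7 set set)"
    by (rule exI[of _ "0::7"], rule exI[of _ "1::7"]) (simp add: doubleton_eq_iff)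
qed (simp)

definition "u1 = (\<lambda>(i::7) a. sel7 i [1,(-2)] [2,1] [(-1),0] [(-1),(-1)] [(-2),1] [2,(-1)] [(-2),(-2)] ! a :: real)"
definition "w1 = (\<lambda>i::7. sel7 i 13 5 6 4 3 3 6 :: real)"
lemma good1: "good {{0::7,1}}"
proof (rule weighted_good[where k=2 and c="91" and u=u1 and w=w1])
  show "\<forall>i. 0 < w1 i" by (simp add: all7 w1_def)
  show "\<forall>a<2. \<forall>b<2. (\<Sum>i\<in>UNIV. w1 i * u1 i a * u1 i b) = (if a = b then 91 else 0)"
    by (simp add: csimps u1_def w1_def)
  show "\<forall>i j. i \<noteq> j \<longrightarrow> ((\<Sum>a<2. u1 i a * u1 j a) \<noteq> 0 \<longleftrightarrow> {i,j} \<notin> {{0::7,1}})"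
    unfolding all7 by (simp add: csimps u1_def)
  show "\<exists>i j. i \<noteq> j \<and> {i,j} \<notin> {{0::7,1}}"
    by (rule exI[of _ "0::7"], rule exI[of _ "2::7"]) (simp add: doubleton_eq_iff)
qed (simp)

definition "u2 = (\<lambda>(i::7) a. sel7 i [2,1] [(-1),2] [(-1),2] [(-2),0] [1,1] [(-2),(-2)] [2,0] ! a :: real)"
definition "w2 = (\<lambda>i::7. sel7 i (13/2) 6 4 (13/8) 3 1 1 :: real)"
lemma good2: "good {{0::7,1},{0,2}}"
proof (rule weighted_good[where k=2 and c="(107/2)" and u=u2 and w=w2])
  show "\<forall>i. 0 < w2 i" by (simp add: all7 w2_def)
  show "\<forall>a<2. \<forall>b<2. (\<Sum>i\<in>UNIV. w2 i * u2 i a * u2 i b) = (if a = b then (107/2) else 0)"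
    by (simp add: csimps u2_def w2_def)
  show "\<forall>i j. i \<noteq> j \<longrightarrow> ((\<Sum>a<2. u2 i a * u2 j a) \<noteq> 0 \<longleftrightarrow> {i,j} \<notin> {{0::7,1},{0,2}})"
    unfolding all7 by (simp add: csimps u2_def)
  show "\<exists>i j. i \<noteq> j \<and> {i,j} \<notin> {{0::7,1},{0,2}}"
    by (rule exI[of _ "0::7"], rule exI[of _ "3::7"]) (simp add: doubleton_eq_iff)
qed (simp)

definition "u3 = (\<lambda>(i::7) a. sel7 i [1,0] [0,2] [1,2] [(-2),1] [1,(-2)] [(-1),2] [2,(-2)] ! a :: real)"
definition "w3 = (\<lambda>i::7. sel7 i 110 2 26 3 5 6 6 :: real)"
lemma good3: "good {{0::7,1},{2,3}}"
proof (rule weighted_good[where k=2 and c="183" and u=u3 and w=w3])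
  show "\<forall>i. 0 < w3 i" by (simp add: all7 w3_def)
  show "\<forall>a<2. \<forall>b<2. (\<Sum>i\<in>UNIV. w3 i * u3 i a * u3 i b) = (if a = b then 183 else 0)"
    by (simp add: csimps u3_def w3_def)
  show "\<forall>i j. i \<noteq> j \<longrightarrow> ((\<Sum>a<2. u3 i a * u3 j a) \<noteq> 0 \<longleftrightarrow> {i,j} \<notin> {{0::7,1},{2,3}})"
    unfolding all7 by (simp add: csimps u3_def)
  show "\<exists>i j. i \<noteq> j \<and> {i,j} \<notin> {{0::7,1},{2,3}}"
    by (rule exI[of _ "0::7"], rule exI[of _ "2::7"]) (simp add: doubleton_eq_iff)
qed (simp)

definition "u4 = (\<lambda>(i::7) a. sel7 i [(-1),0] [0,2] [0,2] [0,(-2)] [(-1),(-1)] [(-2),(-2)] [(-1),2] ! a :: real)"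
definition "w4 = (\<lambda>i::7. sel7 i 45 2 5 2 2 1 3 :: real)"
lemma good4: "good {{0::7,1},{0,2},{0,3}}"
proof (rule weighted_good[where k=2 and c="54" and u=u4 and w=w4])
  show "\<forall>i. 0 < w4 i" by (simp add: all7 w4_def)
  show "\<forall>a<2. \<forall>b<2. (\<Sum>i\<in>UNIV. w4 i * u4 i a * u4 i b) = (if a = b then 54 else 0)"
    by (simp add: csimps u4_def w4_def)
  show "\<forall>i j. i \<noteq> j \<longrightarrow> ((\<Sum>a<2. u4 i a * u4 j a) \<noteq> 0 \<longleftrightarrow> {i,j} \<notin> {{0::7,1},{0,2},{0,3}})"
    unfolding all7 by (simp add: csimps u4_def)
  show "\<exists>i j. i \<noteq> j \<and> {i,j} \<notin> {{0::7,1},{0,2},{0,3}}"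
    by (rule exI[of _ "0::7"], rule exI[of _ "4::7"]) (simp add: doubleton_eq_iff)
qed (simp)

definition "u5 = (\<lambda>(i::7) a. sel7 i [2,1,2] [(-1),(-2),2] [2,(-2),(-1)] [1,(-2),1] [2,0,0] [(-1),(-2),(-1)] [(-2),1,2] ! a :: real)"
definition "w5 = (\<lambda>i::7. sel7 i (19/3) (16/3) 2 6 (5/2) (10/3) 5 :: real)"
lemma good5: "good {{0::7,1},{0,2},{1,2}}"
proof (rule weighted_good[where k=3 and c="78" and u=u5 and w=w5])
  show "\<forall>i. 0 < w5 i" by (simp add: all7 w5_def)
  show "\<forall>a<3. \<forall>b<3. (\<Sum>i\<in>UNIV. w5 i * u5 i a * u5 i b) = (if a = b then 78 else 0)"
    by (simp add: csimps u5_def w5_def)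
  show "\<forall>i j. i \<noteq> j \<longrightarrow> ((\<Sum>a<3. u5 i a * u5 j a) \<noteq> 0 \<longleftrightarrow> {i,j} \<notin> {{0::7,1},{0,2},{1,2}})"
    unfolding all7 by (simp add: csimps u5_def)
  show "\<exists>i j. i \<noteq> j \<and> {i,j} \<notin> {{0::7,1},{0,2},{1,2}}"
    by (rule exI[of _ "0::7"], rule exI[of _ "3::7"]) (simp add: doubleton_eq_iff)
qed (simp)

definition "u6 = (\<lambda>(i::7) a. sel7 i [1,0,(-2)] [2,2,1] [2,(-2),1] [0,(-1),2] [(-1),(-2),1] [(-1),2,(-1)] [(-1),1,2] ! a :: real)"
definition "w6 = (\<lambda>i::7. sel7 i (69/5) (47/5) (26/3) (1/5) (38/15) 2 4 :: real)"
lemma good6: "good {{0::7,1},{0,2},{1,3}}"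
proof (rule weighted_good[where k=3 and c="(473/5)" and u=u6 and w=w6])
  show "\<forall>i. 0 < w6 i" by (simp add: all7 w6_def)
  show "\<forall>a<3. \<forall>b<3. (\<Sum>i\<in>UNIV. w6 i * u6 i a * u6 i b) = (if a = b then (473/5) else 0)"
    by (simp add: csimps u6_def w6_def)
  show "\<forall>i j. i \<noteq> j \<longrightarrow> ((\<Sum>a<3. u6 i a * u6 j a) \<noteq> 0 \<longleftrightarrow> {i,j} \<notin> {{0::7,1},{0,2},{1,3}})"
    unfolding all7 by (simp add: csimps u6_def)
  show "\<exists>i j. i \<noteq> j \<and> {i,j} \<notin> {{0::7,1},{0,2},{1,3}}"
    by (rule exI[of _ "0::7"], rule exI[of _ "3::7"]) (simp add: doubleton_eq_iff)
qed (simp)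

definition "u7 = (\<lambda>(i::7) a. sel7 i [0,1] [(-2),0] [2,0] [1,(-1)] [2,2] [(-1),(-2)] [(-1),(-2)] ! a :: real)"
definition "w7 = (\<lambda>i::7. sel7 i 5 3 2 18 2 2 3 :: real)"
lemma good7: "good {{0::7,1},{0,2},{3,4}}"
proof (rule weighted_good[where k=2 and c="51" and u=u7 and w=w7])
  show "\<forall>i. 0 < w7 i" by (simp add: all7 w7_def)
  show "\<forall>a<2. \<forall>b<2. (\<Sum>i\<in>UNIV. w7 i * u7 i a * u7 i b) = (if a = b then 51 else 0)"
    by (simp add: csimps u7_def w7_def)
  show "\<forall>i j. i \<noteq> j \<longrightarrow> ((\<Sum>a<2. u7 i a * u7 j a) \<noteq> 0 \<longleftrightarrow> {i,j} \<notin> {{0::7,1},{0,2},{3,4}})"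
    unfolding all7 by (simp add: csimps u7_def)
  show "\<exists>i j. i \<noteq> j \<and> {i,j} \<notin> {{0::7,1},{0,2},{3,4}}"
    by (rule exI[of _ "0::7"], rule exI[of _ "3::7"]) (simp add: doubleton_eq_iff)
qed (simp)

definition "u8 = (\<lambda>(i::7) a. sel7 i [(-2),0] [0,1] [2,2] [2,(-2)] [(-2),1] [1,2] [(-1),2] ! a :: real)"
definition "w8 = (\<lambda>i::7. sel7 i (9/4) 3 9 4 5 1 6 :: real)"
lemma good8: "good {{0::7,1},{2,3},{4,5}}"
proof (rule weighted_good[where k=2 and c="88" and u=u8 and w=w8])
  show "\<forall>i. 0 < w8 i" by (simp add: all7 w8_def)
  show "\<forall>a<2. \<forall>b<2. (\<Sum>i\<in>UNIV. w8 i * u8 i a * u8 i b) = (if a = b then 88 else 0)"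
    by (simp add: csimps u8_def w8_def)
  show "\<forall>i j. i \<noteq> j \<longrightarrow> ((\<Sum>a<2. u8 i a * u8 j a) \<noteq> 0 \<longleftrightarrow> {i,j} \<notin> {{0::7,1},{2,3},{4,5}})"
    unfolding all7 by (simp add: csimps u8_def)
  show "\<exists>i j. i \<noteq> j \<and> {i,j} \<notin> {{0::7,1},{2,3},{4,5}}"
    by (rule exI[of _ "0::7"], rule exI[of _ "2::7"]) (simp add: doubleton_eq_iff)
qed (simp)

definition "u9 = (\<lambda>(i::7) a. sel7 i [1,2] [2,(-1)] [2,(-1)] [(-2),1] [(-2),1] [(-1),0] [(-1),1] ! a :: real)"
definition "w9 = (\<lambda>i::7. sel7 i (29/2) 1 3 6 3 (9/2) 3 :: real)"
lemma good9: "good {{0::7,1},{0,2},{0,3},{0,4}}"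
proof (rule weighted_good[where k=2 and c="74" and u=u9 and w=w9])
  show "\<forall>i. 0 < w9 i" by (simp add: all7 w9_def)
  show "\<forall>a<2. \<forall>b<2. (\<Sum>i\<in>UNIV. w9 i * u9 i a * u9 i b) = (if a = b then 74 else 0)"
    by (simp add: csimps u9_def w9_def)
  show "\<forall>i j. i \<noteq> j \<longrightarrow> ((\<Sum>a<2. u9 i a * u9 j a) \<noteq> 0 \<longleftrightarrow> {i,j} \<notin> {{0::7,1},{0,2},{0,3},{0,4}})"
    unfolding all7 by (simp add: csimps u9_def)
  show "\<exists>i j. i \<noteq> j \<and> {i,j} \<notin> {{0::7,1},{0,2},{0,3},{0,4}}"
    by (rule exI[of _ "0::7"], rule exI[of _ "5::7"]) (simp add: doubleton_eq_iff)
qed (simp)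

definition "u10 = (\<lambda>(i::7) a. sel7 i [1,(-2),1] [2,2,2] [(-2),0,2] [0,1,2] [(-2),1,0] [2,2,0] [(-1),(-1),(-2)] ! a :: real)"
definition "w10 = (\<lambda>i::7. sel7 i (5/3) (1/12) 1 (1/2) (1/2) (3/4) 1 :: real)"
lemma good10: "good {{0::7,1},{0,2},{0,3},{1,2}}"
proof (rule weighted_good[where k=3 and c="12" and u=u10 and w=w10])
  show "\<forall>i. 0 < w10 i" by (simp add: all7 w10_def)
  show "\<forall>a<3. \<forall>b<3. (\<Sum>i\<in>UNIV. w10 i * u10 i a * u10 i b) = (if a = b then 12 else 0)"
    by (simp add: csimps u10_def w10_def)
  show "\<forall>i j. i \<noteq> j \<longrightarrow> ((\<Sum>a<3. u10 i a * u10 j a) \<noteq> 0 \<longleftrightarrow> {i,j} \<notin> {{0::7,1},{0,2},{0,3},{1,2}})"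
    unfolding all7 by (simp add: csimps u10_def)
  show "\<exists>i j. i \<noteq> j \<and> {i,j} \<notin> {{0::7,1},{0,2},{0,3},{1,2}}"
    by (rule exI[of _ "0::7"], rule exI[of _ "4::7"]) (simp add: doubleton_eq_iff)
qed (simp)

definition "u11 = (\<lambda>(i::7) a. sel7 i [0,(-2),2] [0,1,1] [(-1),(-2),(-2)] [2,(-1),(-1)] [(-2),1,(-1)] [2,1,0] [(-1),0,(-1)] ! a :: real)"
definition "w11 = (\<lambda>i::7. sel7 i (155/32) (125/8) (1/4) 4 (5/4) 5 5 :: real)"
lemma good11: "good {{0::7,1},{0,2},{0,3},{1,4}}"
proof (rule weighted_good[where k=3 and c="(185/4)" and u=u11 and w=w11])
  show "\<forall>i. 0 < w11 i" by (simp add: all7 w11_def)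
  show "\<forall>a<3. \<forall>b<3. (\<Sum>i\<in>UNIV. w11 i * u11 i a * u11 i b) = (if a = b then (185/4) else 0)"
    by (simp add: csimps u11_def w11_def)
  show "\<forall>i j. i \<noteq> j \<longrightarrow> ((\<Sum>a<3. u11 i a * u11 j a) \<noteq> 0 \<longleftrightarrow> {i,j} \<notin> {{0::7,1},{0,2},{0,3},{1,4}})"
    unfolding all7 by (simp add: csimps u11_def)
  show "\<exists>i j. i \<noteq> j \<and> {i,j} \<notin> {{0::7,1},{0,2},{0,3},{1,4}}"
    by (rule exI[of _ "0::7"], rule exI[of _ "4::7"]) (simp add: doubleton_eq_iff)
qed (simp)

definition "u12 = (\<lambda>(i::7) a. sel7 i [(-2),0] [0,2] [0,(-1)] [0,(-1)] [2,(-2)] [1,1] [(-1),2] ! a :: real)"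
definition "w12 = (\<lambda>i::7. sel7 i 5 2 5 4 (3/4) 5 1 :: real)"
lemma good12: "good {{0::7,1},{0,2},{0,3},{4,5}}"
proof (rule weighted_good[where k=2 and c="29" and u=u12 and w=w12])
  show "\<forall>i. 0 < w12 i" by (simp add: all7 w12_def)
  show "\<forall>a<2. \<forall>b<2. (\<Sum>i\<in>UNIV. w12 i * u12 i a * u12 i b) = (if a = b then 29 else 0)"
    by (simp add: csimps u12_def w12_def)
  show "\<forall>i j. i \<noteq> j \<longrightarrow> ((\<Sum>a<2. u12 i a * u12 j a) \<noteq> 0 \<longleftrightarrow> {i,j} \<notin> {{0::7,1},{0,2},{0,3},{4,5}})"
    unfolding all7 by (simp add: csimps u12_def)
  show "\<exists>i j. i \<noteq> j \<and> {i,j} \<notin> {{0::7,1},{0,2},{0,3},{4,5}}"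
    by (rule exI[of _ "0::7"], rule exI[of _ "4::7"]) (simp add: doubleton_eq_iff)
qed (simp)

definition "u13 = (\<lambda>(i::7) a. sel7 i [(-2),0,0] [0,1,0] [0,0,(-1)] [1,1,(-2)] [(-2),(-2),(-2)] [2,(-2),2] [(-2),1,2] ! a :: real)"
definition "w13 = (\<lambda>i::7. sel7 i (13/4) 22 1 4 (11/4) (9/4) 3 :: real)"
lemma good13: "good {{0::7,1},{0,2},{1,2},{3,4}}"
proof (rule weighted_good[where k=3 and c="49" and u=u13 and w=w13])
  show "\<forall>i. 0 < w13 i" by (simp add: all7 w13_def)
  show "\<forall>a<3. \<forall>b<3. (\<Sum>i\<in>UNIV. w13 i * u13 i a * u13 i b) = (if a = b then 49 else 0)"
    by (simp add: csimps u13_def w13_def)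
  show "\<forall>i j. i \<noteq> j \<longrightarrow> ((\<Sum>a<3. u13 i a * u13 j a) \<noteq> 0 \<longleftrightarrow> {i,j} \<notin> {{0::7,1},{0,2},{1,2},{3,4}})"
    unfolding all7 by (simp add: csimps u13_def)
  show "\<exists>i j. i \<noteq> j \<and> {i,j} \<notin> {{0::7,1},{0,2},{1,2},{3,4}}"
    by (rule exI[of _ "0::7"], rule exI[of _ "3::7"]) (simp add: doubleton_eq_iff)
qed (simp)

definition "u14 = (\<lambda>(i::7) a. sel7 i [(-1),1] [1,1] [(-2),(-2)] [(-1),1] [1,(-2)] [1,(-2)] [2,0] ! a :: real)"
definition "w14 = (\<lambda>i::7. sel7 i (46/3) 2 5 4 (1/3) 1 1 :: real)"
lemma good14: "good {{0::7,1},{0,2},{1,3},{2,3}}"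
proof (rule weighted_good[where k=2 and c="(140/3)" and u=u14 and w=w14])
  show "\<forall>i. 0 < w14 i" by (simp add: all7 w14_def)
  show "\<forall>a<2. \<forall>b<2. (\<Sum>i\<in>UNIV. w14 i * u14 i a * u14 i b) = (if a = b then (140/3) else 0)"
    by (simp add: csimps u14_def w14_def)
  show "\<forall>i j. i \<noteq> j \<longrightarrow> ((\<Sum>a<2. u14 i a * u14 j a) \<noteq> 0 \<longleftrightarrow> {i,j} \<notin> {{0::7,1},{0,2},{1,3},{2,3}})"
    unfolding all7 by (simp add: csimps u14_def)
  show "\<exists>i j. i \<noteq> j \<and> {i,j} \<notin> {{0::7,1},{0,2},{1,3},{2,3}}"
    by (rule exI[of _ "0::7"], rule exI[of _ "3::7"]) (simp add: doubleton_eq_iff)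
qed (simp)

definition "u15 = (\<lambda>(i::7) a. sel7 i [1,(-2),(-2)] [(-2),(-2),1] [(-2),0,(-1)] [(-1),0,(-2)] [(-1),(-2),2] [(-2),2,(-1)] [2,0,2] ! a :: real)"
definition "w15 = (\<lambda>i::7. sel7 i (23/2) 10 8 9 (7/2) 6 1 :: real)"
lemma good15: "good {{0::7,1},{0,2},{1,3},{2,4}}"
proof (rule weighted_good[where k=3 and c="124" and u=u15 and w=w15])
  show "\<forall>i. 0 < w15 i" by (simp add: all7 w15_def)
  show "\<forall>a<3. \<forall>b<3. (\<Sum>i\<in>UNIV. w15 i * u15 i a * u15 i b) = (if a = b then 124 else 0)"
    by (simp add: csimps u15_def w15_def)
  show "\<forall>i j. i \<noteq> j \<longrightarrow> ((\<Sum>a<3. u15 i a * u15 j a) \<noteq> 0 \<longleftrightarrow> {i,j} \<notin> {{0::7,1},{0,2},{1,3},{2,4}})"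
    unfolding all7 by (simp add: csimps u15_def)
  show "\<exists>i j. i \<noteq> j \<and> {i,j} \<notin> {{0::7,1},{0,2},{1,3},{2,4}}"
    by (rule exI[of _ "0::7"], rule exI[of _ "3::7"]) (simp add: doubleton_eq_iff)
qed (simp)

definition "u16 = (\<lambda>(i::7) a. sel7 i [(-2),2,0] [0,0,(-1)] [2,2,(-2)] [1,2,0] [2,1,2] [(-1),0,1] [(-1),(-2),1] ! a :: real)"
definition "w16 = (\<lambda>i::7. sel7 i (29/12) (23/2) (1/4) (11/6) (3/2) 4 1 :: real)"
lemma good16: "good {{0::7,1},{0,2},{1,3},{4,5}}"
proof (rule weighted_good[where k=3 and c="(47/2)" and u=u16 and w=w16])
  show "\<forall>i. 0 < w16 i" by (simp add: all7 w16_def)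
  show "\<forall>a<3. \<forall>b<3. (\<Sum>i\<in>UNIV. w16 i * u16 i a * u16 i b) = (if a = b then (47/2) else 0)"
    by (simp add: csimps u16_def w16_def)
  show "\<forall>i j. i \<noteq> j \<longrightarrow> ((\<Sum>a<3. u16 i a * u16 j a) \<noteq> 0 \<longleftrightarrow> {i,j} \<notin> {{0::7,1},{0,2},{1,3},{4,5}})"
    unfolding all7 by (simp add: csimps u16_def)
  show "\<exists>i j. i \<noteq> j \<and> {i,j} \<notin> {{0::7,1},{0,2},{1,3},{4,5}}"
    by (rule exI[of _ "0::7"], rule exI[of _ "3::7"]) (simp add: doubleton_eq_iff)
qed (simp)

definition "u17 = (\<lambda>(i::7) a. sel7 i [2,1] [(-1),2] [1,(-2)] [2,2] [1,(-1)] [2,(-2)] [0,(-1)] ! a :: real)"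
definition "w17 = (\<lambda>i::7. sel7 i (20/3) 5 1 (29/12) 3 2 2 :: real)"
lemma good17: "good {{0::7,1},{0,2},{3,4},{3,5}}"
proof (rule weighted_good[where k=2 and c="(160/3)" and u=u17 and w=w17])
  show "\<forall>i. 0 < w17 i" by (simp add: all7 w17_def)
  show "\<forall>a<2. \<forall>b<2. (\<Sum>i\<in>UNIV. w17 i * u17 i a * u17 i b) = (if a = b then (160/3) else 0)"
    by (simp add: csimps u17_def w17_def)
  show "\<forall>i j. i \<noteq> j \<longrightarrow> ((\<Sum>a<2. u17 i a * u17 j a) \<noteq> 0 \<longleftrightarrow> {i,j} \<notin> {{0::7,1},{0,2},{3,4},{3,5}})"
    unfolding all7 by (simp add: csimps u17_def)
  show "\<exists>i j. i \<noteq> j \<and> {i,j} \<notin> {{0::7,1},{0,2},{3,4},{3,5}}"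
    by (rule exI[of _ "0::7"], rule exI[of _ "3::7"]) (simp add: doubleton_eq_iff)
qed (simp)

definition "u18 = (\<lambda>(i::7) a. sel7 i [(-1),1] [1,1] [(-1),(-1)] [0,(-1)] [2,0] [(-1),2] [(-2),(-1)] ! a :: real)"
definition "w18 = (\<lambda>i::7. sel7 i 4 5 1 5 2 2 1 :: real)"
lemma good18: "good {{0::7,1},{0,2},{3,4},{5,6}}"
proof (rule weighted_good[where k=2 and c="24" and u=u18 and w=w18])
  show "\<forall>i. 0 < w18 i" by (simp add: all7 w18_def)
  show "\<forall>a<2. \<forall>b<2. (\<Sum>i\<in>UNIV. w18 i * u18 i a * u18 i b) = (if a = b then 24 else 0)"
    by (simp add: csimps u18_def w18_def)
  show "\<forall>i j. i \<noteq> j \<longrightarrow> ((\<Sum>a<2. u18 i a * u18 j a) \<noteq> 0 \<longleftrightarrow> {i,j} \<notin> {{0::7,1},{0,2},{3,4},{5,6}})"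
    unfolding all7 by (simp add: csimps u18_def)
  show "\<exists>i j. i \<noteq> j \<and> {i,j} \<notin> {{0::7,1},{0,2},{3,4},{5,6}}"
    by (rule exI[of _ "0::7"], rule exI[of _ "3::7"]) (simp add: doubleton_eq_iff)
qed (simp)

lemma nd9: "nd 4 {{0::7,1},{0,2},{0,3},{0,4}}" by (rule nd_leaf[OF good9])

lemma nd10: "nd 4 {{0::7,1},{0,2},{0,3},{1,2}}" by (rule nd_leaf[OF good10])

lemma nd11: "nd 4 {{0::7,1},{0,2},{0,3},{1,4}}" by (rule nd_leaf[OF good11])

lemma nd12: "nd 4 {{0::7,1},{0,2},{0,3},{4,5}}" by (rule nd_leaf[OF good12])

lemma nd13: "nd 4 {{0::7,1},{0,2},{1,2},{3,4}}" by (rule nd_leaf[OF good13])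

lemma nd14: "nd 4 {{0::7,1},{0,2},{1,3},{2,3}}" by (rule nd_leaf[OF good14])

lemma nd15: "nd 4 {{0::7,1},{0,2},{1,3},{2,4}}" by (rule nd_leaf[OF good15])

lemma nd16: "nd 4 {{0::7,1},{0,2},{1,3},{4,5}}" by (rule nd_leaf[OF good16])

lemma nd17: "nd 4 {{0::7,1},{0,2},{3,4},{3,5}}" by (rule nd_leaf[OF good17])

lemma nd18: "nd 4 {{0::7,1},{0,2},{3,4},{5,6}}" by (rule nd_leaf[OF good18])

lemma nd4: "nd 3 {{0::7,1},{0,2},{0,3}}"
proof (rule nd_intro_3)
  show "good {{0::7,1},{0,2},{0,3}}" by (rule good4)
next
  fix a b :: 7
  assume ab: "a \<noteq> b" "{a,b} \<notin> {{0::7,1},{0,2},{0,3}}"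
  have KV: "\<forall>e\<in>{{0::7,1},{0,2},{0,3}}. e \<subseteq> ({0,1,2,3}::7 set)" by simp
  have f_1_2: "nd 4 (insert {1,2} {{0::7,1},{0,2},{0,3}})"
  proof (rule nd_perm[OF bij_sel7[of 0 1 2 3 4 5 6 0 1 2 3 4 5 6]])
    show "\<forall>x. sel7 (sel7 x 0 1 2 3 4 5 6) 0 1 2 3 4 5 6 = x" by (simp add: all7)
    have "(`) (\<lambda>z::7. sel7 z 0 1 2 3 4 5 (6::7)) ` (insert {1,2} {{0::7,1},{0,2},{0,3}}) = {{1::7,2},{0,1},{0,2},{0,3}}" by simp
    also have "\<dots> = {{0::7,1},{0,2},{0,3},{1,2}}" by (simp only: insert_commute)
    finally show "nd 4 ((`) (\<lambda>z::7. sel7 z 0 1 2 3 4 5 (6::7)) ` (insert {1,2} {{0::7,1},{0,2},{0,3}}))" by (simp only: nd10)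
  qed
  have f_1_2': "nd 4 (insert {2,1} {{0::7,1},{0,2},{0,3}})" unfolding insert_commute[of "2::7" "1" "{}"] by (rule f_1_2)
  have f_1_3: "nd 4 (insert {1,3} {{0::7,1},{0,2},{0,3}})"
  proof (rule nd_perm[OF bij_sel7[of 0 1 3 2 4 5 6 0 1 3 2 4 5 6]])
    show "\<forall>x. sel7 (sel7 x 0 1 3 2 4 5 6) 0 1 3 2 4 5 6 = x" by (simp add: all7)
    have "(`) (\<lambda>z::7. sel7 z 0 1 3 2 4 5 (6::7)) ` (insert {1,3} {{0::7,1},{0,2},{0,3}}) = {{1::7,2},{0,1},{0,3},{0,2}}" by simp
    also have "\<dots> = {{0::7,1},{0,2},{0,3},{1,2}}" by (simp only: insert_commute)
    finally show "nd 4 ((`) (\<lambda>z::7. sel7 z 0 1 3 2 4 5 (6::7)) ` (insert {1,3} {{0::7,1},{0,2},{0,3}}))" by (simp only: nd10)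
  qed
  have f_1_3': "nd 4 (insert {3,1} {{0::7,1},{0,2},{0,3}})" unfolding insert_commute[of "3::7" "1" "{}"] by (rule f_1_3)
  have f_2_3: "nd 4 (insert {2,3} {{0::7,1},{0,2},{0,3}})"
  proof (rule nd_perm[OF bij_sel7[of 0 3 1 2 4 5 6 0 2 3 1 4 5 6]])
    show "\<forall>x. sel7 (sel7 x 0 3 1 2 4 5 6) 0 2 3 1 4 5 6 = x" by (simp add: all7)
    have "(`) (\<lambda>z::7. sel7 z 0 3 1 2 4 5 (6::7)) ` (insert {2,3} {{0::7,1},{0,2},{0,3}}) = {{1::7,2},{0,3},{0,1},{0,2}}" by simp
    also have "\<dots> = {{0::7,1},{0,2},{0,3},{1,2}}" by (simp only: insert_commute)
    finally show "nd 4 ((`) (\<lambda>z::7. sel7 z 0 3 1 2 4 5 (6::7)) ` (insert {2,3} {{0::7,1},{0,2},{0,3}}))" by (simp only: nd10)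
  qed
  have f_2_3': "nd 4 (insert {3,2} {{0::7,1},{0,2},{0,3}})" unfolding insert_commute[of "3::7" "2" "{}"] by (rule f_2_3)
  have f_0_4: "nd 4 (insert {0,4} {{0::7,1},{0,2},{0,3}})"
  proof (rule nd_perm[OF bij_sel7[of 0 1 2 3 4 5 6 0 1 2 3 4 5 6]])
    show "\<forall>x. sel7 (sel7 x 0 1 2 3 4 5 6) 0 1 2 3 4 5 6 = x" by (simp add: all7)
    have "(`) (\<lambda>z::7. sel7 z 0 1 2 3 4 5 (6::7)) ` (insert {0,4} {{0::7,1},{0,2},{0,3}}) = {{0::7,4},{0,1},{0,2},{0,3}}" by simp
    also have "\<dots> = {{0::7,1},{0,2},{0,3},{0,4}}" by (simp only: insert_commute)
    finally show "nd 4 ((`) (\<lambda>z::7. sel7 z 0 1 2 3 4 5 (6::7)) ` (insert {0,4} {{0::7,1},{0,2},{0,3}}))" by (simp only: nd9)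
  qed
  have f_0_4': "nd 4 (insert {4,0} {{0::7,1},{0,2},{0,3}})" unfolding insert_commute[of "4::7" "0" "{}"] by (rule f_0_4)
  have f_1_4: "nd 4 (insert {1,4} {{0::7,1},{0,2},{0,3}})"
  proof (rule nd_perm[OF bij_sel7[of 0 1 2 3 4 5 6 0 1 2 3 4 5 6]])
    show "\<forall>x. sel7 (sel7 x 0 1 2 3 4 5 6) 0 1 2 3 4 5 6 = x" by (simp add: all7)
    have "(`) (\<lambda>z::7. sel7 z 0 1 2 3 4 5 (6::7)) ` (insert {1,4} {{0::7,1},{0,2},{0,3}}) = {{1::7,4},{0,1},{0,2},{0,3}}" by simp
    also have "\<dots> = {{0::7,1},{0,2},{0,3},{1,4}}" by (simp only: insert_commute)
    finally show "nd 4 ((`) (\<lambda>z::7. sel7 z 0 1 2 3 4 5 (6::7)) ` (insert {1,4} {{0::7,1},{0,2},{0,3}}))" by (simp only: nd11)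
  qed
  have f_1_4': "nd 4 (insert {4,1} {{0::7,1},{0,2},{0,3}})" unfolding insert_commute[of "4::7" "1" "{}"] by (rule f_1_4)
  have f_2_4: "nd 4 (insert {2,4} {{0::7,1},{0,2},{0,3}})"
  proof (rule nd_perm[OF bij_sel7[of 0 2 1 3 4 5 6 0 2 1 3 4 5 6]])
    show "\<forall>x. sel7 (sel7 x 0 2 1 3 4 5 6) 0 2 1 3 4 5 6 = x" by (simp add: all7)
    have "(`) (\<lambda>z::7. sel7 z 0 2 1 3 4 5 (6::7)) ` (insert {2,4} {{0::7,1},{0,2},{0,3}}) = {{1::7,4},{0,2},{0,1},{0,3}}" by simp
    also have "\<dots> = {{0::7,1},{0,2},{0,3},{1,4}}" by (simp only: insert_commute)
    finally show "nd 4 ((`) (\<lambda>z::7. sel7 z 0 2 1 3 4 5 (6::7)) ` (insert {2,4} {{0::7,1},{0,2},{0,3}}))" by (simp only: nd11)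
  qed
  have f_2_4': "nd 4 (insert {4,2} {{0::7,1},{0,2},{0,3}})" unfolding insert_commute[of "4::7" "2" "{}"] by (rule f_2_4)
  have f_3_4: "nd 4 (insert {3,4} {{0::7,1},{0,2},{0,3}})"
  proof (rule nd_perm[OF bij_sel7[of 0 2 3 1 4 5 6 0 3 1 2 4 5 6]])
    show "\<forall>x. sel7 (sel7 x 0 2 3 1 4 5 6) 0 3 1 2 4 5 6 = x" by (simp add: all7)
    have "(`) (\<lambda>z::7. sel7 z 0 2 3 1 4 5 (6::7)) ` (insert {3,4} {{0::7,1},{0,2},{0,3}}) = {{1::7,4},{0,2},{0,3},{0,1}}" by simp
    also have "\<dots> = {{0::7,1},{0,2},{0,3},{1,4}}" by (simp only: insert_commute)
    finally show "nd 4 ((`) (\<lambda>z::7. sel7 z 0 2 3 1 4 5 (6::7)) ` (insert {3,4} {{0::7,1},{0,2},{0,3}}))" by (simp only: nd11)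
  qed
  have f_3_4': "nd 4 (insert {4,3} {{0::7,1},{0,2},{0,3}})" unfolding insert_commute[of "4::7" "3" "{}"] by (rule f_3_4)
  have f_4_5: "nd 4 (insert {4,5} {{0::7,1},{0,2},{0,3}})"
  proof (rule nd_perm[OF bij_sel7[of 0 1 2 3 4 5 6 0 1 2 3 4 5 6]])
    show "\<forall>x. sel7 (sel7 x 0 1 2 3 4 5 6) 0 1 2 3 4 5 6 = x" by (simp add: all7)
    have "(`) (\<lambda>z::7. sel7 z 0 1 2 3 4 5 (6::7)) ` (insert {4,5} {{0::7,1},{0,2},{0,3}}) = {{4::7,5},{0,1},{0,2},{0,3}}" by simp
    also have "\<dots> = {{0::7,1},{0,2},{0,3},{4,5}}" by (simp only: insert_commute)
    finally show "nd 4 ((`) (\<lambda>z::7. sel7 z 0 1 2 3 4 5 (6::7)) ` (insert {4,5} {{0::7,1},{0,2},{0,3}}))" by (simp only: nd12)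
  qed
  have f_4_5': "nd 4 (insert {5,4} {{0::7,1},{0,2},{0,3}})" unfolding insert_commute[of "5::7" "4" "{}"] by (rule f_4_5)
  show "nd 4 (insert {a,b} {{0::7,1},{0,2},{0,3}})"
  proof (cases "a \<in> ({0,1,2,3}::7 set)")
    case aV: True
    show ?thesis
    proof (cases "b \<in> ({0,1,2,3}::7 set)")
      case bV: True
      from aV bV ab show ?thesis by (elim insertE emptyE) (simp_all add: f_1_2 f_1_2' f_1_3 f_1_3' f_2_3 f_2_3' f_0_4 f_0_4' f_1_4 f_1_4' f_2_4 f_2_4' f_3_4 f_3_4' f_4_5 f_4_5' doubleton_eq_iff)
    next
      case bV: False
      have X: "nd 4 (insert {a,4} {{0::7,1},{0,2},{0,3}})" using aV by (elim insertE emptyE) (simp_all add: f_1_2 f_1_2' f_1_3 f_1_3' f_2_3 f_2_3' f_0_4 f_0_4' f_1_4 f_1_4' f_2_4 f_2_4' f_3_4 f_3_4' f_4_5 f_4_5')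
      show ?thesis by (rule nd_new1[OF KV aV bV _ X]) simp
    qed
  next
    case aV: False
    show ?thesis
    proof (cases "b \<in> ({0,1,2,3}::7 set)")
      case bV: True
      have X: "nd 4 (insert {b,4} {{0::7,1},{0,2},{0,3}})" using bV by (elim insertE emptyE) (simp_all add: f_1_2 f_1_2' f_1_3 f_1_3' f_2_3 f_2_3' f_0_4 f_0_4' f_1_4 f_1_4' f_2_4 f_2_4' f_3_4 f_3_4' f_4_5 f_4_5')
      have "nd 4 (insert {b,a} {{0::7,1},{0,2},{0,3}})" by (rule nd_new1[OF KV bV aV _ X]) simp
      then show ?thesis by (simp add: insert_commute)
    next
      case bV: False
      show ?thesis by (rule nd_new2[OF KV aV bV ab(1) _ _ _ f_4_5]) simp_all
    qed
  qed
qed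

lemma nd5: "nd 3 {{0::7,1},{0,2},{1,2}}"
proof (rule nd_intro_3)
  show "good {{0::7,1},{0,2},{1,2}}" by (rule good5)
next
  fix a b :: 7
  assume ab: "a \<noteq> b" "{a,b} \<notin> {{0::7,1},{0,2},{1,2}}"
  have KV: "\<forall>e\<in>{{0::7,1},{0,2},{1,2}}. e \<subseteq> ({0,1,2}::7 set)" by simp
  have f_0_3: "nd 4 (insert {0,3} {{0::7,1},{0,2},{1,2}})"
  proof (rule nd_perm[OF bij_sel7[of 0 1 2 3 4 5 6 0 1 2 3 4 5 6]])
    show "\<forall>x. sel7 (sel7 x 0 1 2 3 4 5 6) 0 1 2 3 4 5 6 = x" by (simp add: all7)
    have "(`) (\<lambda>z::7. sel7 z 0 1 2 3 4 5 (6::7)) ` (insert {0,3} {{0::7,1},{0,2},{1,2}}) = {{0::7,3},{0,1},{0,2},{1,2}}" by simp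
    also have "\<dots> = {{0::7,1},{0,2},{0,3},{1,2}}" by (simp only: insert_commute)
    finally show "nd 4 ((`) (\<lambda>z::7. sel7 z 0 1 2 3 4 5 (6::7)) ` (insert {0,3} {{0::7,1},{0,2},{1,2}}))" by (simp only: nd10)
  qed
  have f_0_3': "nd 4 (insert {3,0} {{0::7,1},{0,2},{1,2}})" unfolding insert_commute[of "3::7" "0" "{}"] by (rule f_0_3)
  have f_1_3: "nd 4 (insert {1,3} {{0::7,1},{0,2},{1,2}})"
  proof (rule nd_perm[OF bij_sel7[of 1 0 2 3 4 5 6 1 0 2 3 4 5 6]])
    show "\<forall>x. sel7 (sel7 x 1 0 2 3 4 5 6) 1 0 2 3 4 5 6 = x" by (simp add: all7)
    have "(`) (\<lambda>z::7. sel7 z 1 0 2 3 4 5 (6::7)) ` (insert {1,3} {{0::7,1},{0,2},{1,2}}) = {{0::7,3},{1,0},{1,2},{0,2}}" by simp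
    also have "\<dots> = {{0::7,1},{0,2},{0,3},{1,2}}" by (simp only: insert_commute)
    finally show "nd 4 ((`) (\<lambda>z::7. sel7 z 1 0 2 3 4 5 (6::7)) ` (insert {1,3} {{0::7,1},{0,2},{1,2}}))" by (simp only: nd10)
  qed
  have f_1_3': "nd 4 (insert {3,1} {{0::7,1},{0,2},{1,2}})" unfolding insert_commute[of "3::7" "1" "{}"] by (rule f_1_3)
  have f_2_3: "nd 4 (insert {2,3} {{0::7,1},{0,2},{1,2}})"
  proof (rule nd_perm[OF bij_sel7[of 1 2 0 3 4 5 6 2 0 1 3 4 5 6]])
    show "\<forall>x. sel7 (sel7 x 1 2 0 3 4 5 6) 2 0 1 3 4 5 6 = x" by (simp add: all7)
    have "(`) (\<lambda>z::7. sel7 z 1 2 0 3 4 5 (6::7)) ` (insert {2,3} {{0::7,1},{0,2},{1,2}}) = {{0::7,3},{1,2},{1,0},{2,0}}" by simp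
    also have "\<dots> = {{0::7,1},{0,2},{0,3},{1,2}}" by (simp only: insert_commute)
    finally show "nd 4 ((`) (\<lambda>z::7. sel7 z 1 2 0 3 4 5 (6::7)) ` (insert {2,3} {{0::7,1},{0,2},{1,2}}))" by (simp only: nd10)
  qed
  have f_2_3': "nd 4 (insert {3,2} {{0::7,1},{0,2},{1,2}})" unfolding insert_commute[of "3::7" "2" "{}"] by (rule f_2_3)
  have f_3_4: "nd 4 (insert {3,4} {{0::7,1},{0,2},{1,2}})"
  proof (rule nd_perm[OF bij_sel7[of 0 1 2 3 4 5 6 0 1 2 3 4 5 6]])
    show "\<forall>x. sel7 (sel7 x 0 1 2 3 4 5 6) 0 1 2 3 4 5 6 = x" by (simp add: all7)
    have "(`) (\<lambda>z::7. sel7 z 0 1 2 3 4 5 (6::7)) ` (insert {3,4} {{0::7,1},{0,2},{1,2}}) = {{3::7,4},{0,1},{0,2},{1,2}}" by simp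
    also have "\<dots> = {{0::7,1},{0,2},{1,2},{3,4}}" by (simp only: insert_commute)
    finally show "nd 4 ((`) (\<lambda>z::7. sel7 z 0 1 2 3 4 5 (6::7)) ` (insert {3,4} {{0::7,1},{0,2},{1,2}}))" by (simp only: nd13)
  qed
  have f_3_4': "nd 4 (insert {4,3} {{0::7,1},{0,2},{1,2}})" unfolding insert_commute[of "4::7" "3" "{}"] by (rule f_3_4)
  show "nd 4 (insert {a,b} {{0::7,1},{0,2},{1,2}})"
  proof (cases "a \<in> ({0,1,2}::7 set)")
    case aV: True
    show ?thesis
    proof (cases "b \<in> ({0,1,2}::7 set)")
      case bV: True
      from aV bV ab show ?thesis by (elim insertE emptyE) (simp_all add: f_0_3 f_0_3' f_1_3 f_1_3' f_2_3 f_2_3' f_3_4 f_3_4' doubleton_eq_iff)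
    next
      case bV: False
      have X: "nd 4 (insert {a,3} {{0::7,1},{0,2},{1,2}})" using aV by (elim insertE emptyE) (simp_all add: f_0_3 f_0_3' f_1_3 f_1_3' f_2_3 f_2_3' f_3_4 f_3_4')
      show ?thesis by (rule nd_new1[OF KV aV bV _ X]) simp
    qed
  next
    case aV: False
    show ?thesis
    proof (cases "b \<in> ({0,1,2}::7 set)")
      case bV: True
      have X: "nd 4 (insert {b,3} {{0::7,1},{0,2},{1,2}})" using bV by (elim insertE emptyE) (simp_all add: f_0_3 f_0_3' f_1_3 f_1_3' f_2_3 f_2_3' f_3_4 f_3_4')
      have "nd 4 (insert {b,a} {{0::7,1},{0,2},{1,2}})" by (rule nd_new1[OF KV bV aV _ X]) simp
      then show ?thesis by (simp add: insert_commute)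
    next
      case bV: False
      show ?thesis by (rule nd_new2[OF KV aV bV ab(1) _ _ _ f_3_4]) simp_all
    qed
  qed
qed

lemma nd6: "nd 3 {{0::7,1},{0,2},{1,3}}"
proof (rule nd_intro_3)
  show "good {{0::7,1},{0,2},{1,3}}" by (rule good6)
next
  fix a b :: 7
  assume ab: "a \<noteq> b" "{a,b} \<notin> {{0::7,1},{0,2},{1,3}}"
  have KV: "\<forall>e\<in>{{0::7,1},{0,2},{1,3}}. e \<subseteq> ({0,1,2,3}::7 set)" by simp
  have f_0_3: "nd 4 (insert {0,3} {{0::7,1},{0,2},{1,3}})"
  proof (rule nd_perm[OF bij_sel7[of 0 1 3 2 4 5 6 0 1 3 2 4 5 6]])
    show "\<forall>x. sel7 (sel7 x 0 1 3 2 4 5 6) 0 1 3 2 4 5 6 = x" by (simp add: all7)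
    have "(`) (\<lambda>z::7. sel7 z 0 1 3 2 4 5 (6::7)) ` (insert {0,3} {{0::7,1},{0,2},{1,3}}) = {{0::7,2},{0,1},{0,3},{1,2}}" by simp
    also have "\<dots> = {{0::7,1},{0,2},{0,3},{1,2}}" by (simp only: insert_commute)
    finally show "nd 4 ((`) (\<lambda>z::7. sel7 z 0 1 3 2 4 5 (6::7)) ` (insert {0,3} {{0::7,1},{0,2},{1,3}}))" by (simp only: nd10)
  qed
  have f_0_3': "nd 4 (insert {3,0} {{0::7,1},{0,2},{1,3}})" unfolding insert_commute[of "3::7" "0" "{}"] by (rule f_0_3)
  have f_1_2: "nd 4 (insert {1,2} {{0::7,1},{0,2},{1,3}})"
  proof (rule nd_perm[OF bij_sel7[of 1 0 2 3 4 5 6 1 0 2 3 4 5 6]])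
    show "\<forall>x. sel7 (sel7 x 1 0 2 3 4 5 6) 1 0 2 3 4 5 6 = x" by (simp add: all7)
    have "(`) (\<lambda>z::7. sel7 z 1 0 2 3 4 5 (6::7)) ` (insert {1,2} {{0::7,1},{0,2},{1,3}}) = {{0::7,2},{1,0},{1,2},{0,3}}" by simp
    also have "\<dots> = {{0::7,1},{0,2},{0,3},{1,2}}" by (simp only: insert_commute)
    finally show "nd 4 ((`) (\<lambda>z::7. sel7 z 1 0 2 3 4 5 (6::7)) ` (insert {1,2} {{0::7,1},{0,2},{1,3}}))" by (simp only: nd10)
  qed
  have f_1_2': "nd 4 (insert {2,1} {{0::7,1},{0,2},{1,3}})" unfolding insert_commute[of "2::7" "1" "{}"] by (rule f_1_2)
  have f_2_3: "nd 4 (insert {2,3} {{0::7,1},{0,2},{1,3}})"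
  proof (rule nd_perm[OF bij_sel7[of 0 1 2 3 4 5 6 0 1 2 3 4 5 6]])
    show "\<forall>x. sel7 (sel7 x 0 1 2 3 4 5 6) 0 1 2 3 4 5 6 = x" by (simp add: all7)
    have "(`) (\<lambda>z::7. sel7 z 0 1 2 3 4 5 (6::7)) ` (insert {2,3} {{0::7,1},{0,2},{1,3}}) = {{2::7,3},{0,1},{0,2},{1,3}}" by simp
    also have "\<dots> = {{0::7,1},{0,2},{1,3},{2,3}}" by (simp only: insert_commute)
    finally show "nd 4 ((`) (\<lambda>z::7. sel7 z 0 1 2 3 4 5 (6::7)) ` (insert {2,3} {{0::7,1},{0,2},{1,3}}))" by (simp only: nd14)
  qed
  have f_2_3': "nd 4 (insert {3,2} {{0::7,1},{0,2},{1,3}})" unfolding insert_commute[of "3::7" "2" "{}"] by (rule f_2_3)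
  have f_0_4: "nd 4 (insert {0,4} {{0::7,1},{0,2},{1,3}})"
  proof (rule nd_perm[OF bij_sel7[of 0 1 2 4 3 5 6 0 1 2 4 3 5 6]])
    show "\<forall>x. sel7 (sel7 x 0 1 2 4 3 5 6) 0 1 2 4 3 5 6 = x" by (simp add: all7)
    have "(`) (\<lambda>z::7. sel7 z 0 1 2 4 3 5 (6::7)) ` (insert {0,4} {{0::7,1},{0,2},{1,3}}) = {{0::7,3},{0,1},{0,2},{1,4}}" by simp
    also have "\<dots> = {{0::7,1},{0,2},{0,3},{1,4}}" by (simp only: insert_commute)
    finally show "nd 4 ((`) (\<lambda>z::7. sel7 z 0 1 2 4 3 5 (6::7)) ` (insert {0,4} {{0::7,1},{0,2},{1,3}}))" by (simp only: nd11)
  qed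
  have f_0_4': "nd 4 (insert {4,0} {{0::7,1},{0,2},{1,3}})" unfolding insert_commute[of "4::7" "0" "{}"] by (rule f_0_4)
  have f_1_4: "nd 4 (insert {1,4} {{0::7,1},{0,2},{1,3}})"
  proof (rule nd_perm[OF bij_sel7[of 1 0 4 2 3 5 6 1 0 3 4 2 5 6]])
    show "\<forall>x. sel7 (sel7 x 1 0 4 2 3 5 6) 1 0 3 4 2 5 6 = x" by (simp add: all7)
    have "(`) (\<lambda>z::7. sel7 z 1 0 4 2 3 5 (6::7)) ` (insert {1,4} {{0::7,1},{0,2},{1,3}}) = {{0::7,3},{1,0},{1,4},{0,2}}" by simp
    also have "\<dots> = {{0::7,1},{0,2},{0,3},{1,4}}" by (simp only: insert_commute)
    finally show "nd 4 ((`) (\<lambda>z::7. sel7 z 1 0 4 2 3 5 (6::7)) ` (insert {1,4} {{0::7,1},{0,2},{1,3}}))" by (simp only: nd11)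
  qed
  have f_1_4': "nd 4 (insert {4,1} {{0::7,1},{0,2},{1,3}})" unfolding insert_commute[of "4::7" "1" "{}"] by (rule f_1_4)
  have f_2_4: "nd 4 (insert {2,4} {{0::7,1},{0,2},{1,3}})"
  proof (rule nd_perm[OF bij_sel7[of 0 1 2 3 4 5 6 0 1 2 3 4 5 6]])
    show "\<forall>x. sel7 (sel7 x 0 1 2 3 4 5 6) 0 1 2 3 4 5 6 = x" by (simp add: all7)
    have "(`) (\<lambda>z::7. sel7 z 0 1 2 3 4 5 (6::7)) ` (insert {2,4} {{0::7,1},{0,2},{1,3}}) = {{2::7,4},{0,1},{0,2},{1,3}}" by simp
    also have "\<dots> = {{0::7,1},{0,2},{1,3},{2,4}}" by (simp only: insert_commute)
    finally show "nd 4 ((`) (\<lambda>z::7. sel7 z 0 1 2 3 4 5 (6::7)) ` (insert {2,4} {{0::7,1},{0,2},{1,3}}))" by (simp only: nd15)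
  qed
  have f_2_4': "nd 4 (insert {4,2} {{0::7,1},{0,2},{1,3}})" unfolding insert_commute[of "4::7" "2" "{}"] by (rule f_2_4)
  have f_3_4: "nd 4 (insert {3,4} {{0::7,1},{0,2},{1,3}})"
  proof (rule nd_perm[OF bij_sel7[of 1 0 3 2 4 5 6 1 0 3 2 4 5 6]])
    show "\<forall>x. sel7 (sel7 x 1 0 3 2 4 5 6) 1 0 3 2 4 5 6 = x" by (simp add: all7)
    have "(`) (\<lambda>z::7. sel7 z 1 0 3 2 4 5 (6::7)) ` (insert {3,4} {{0::7,1},{0,2},{1,3}}) = {{2::7,4},{1,0},{1,3},{0,2}}" by simp
    also have "\<dots> = {{0::7,1},{0,2},{1,3},{2,4}}" by (simp only: insert_commute)
    finally show "nd 4 ((`) (\<lambda>z::7. sel7 z 1 0 3 2 4 5 (6::7)) ` (insert {3,4} {{0::7,1},{0,2},{1,3}}))" by (simp only: nd15)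
  qed
  have f_3_4': "nd 4 (insert {4,3} {{0::7,1},{0,2},{1,3}})" unfolding insert_commute[of "4::7" "3" "{}"] by (rule f_3_4)
  have f_4_5: "nd 4 (insert {4,5} {{0::7,1},{0,2},{1,3}})"
  proof (rule nd_perm[OF bij_sel7[of 0 1 2 3 4 5 6 0 1 2 3 4 5 6]])
    show "\<forall>x. sel7 (sel7 x 0 1 2 3 4 5 6) 0 1 2 3 4 5 6 = x" by (simp add: all7)
    have "(`) (\<lambda>z::7. sel7 z 0 1 2 3 4 5 (6::7)) ` (insert {4,5} {{0::7,1},{0,2},{1,3}}) = {{4::7,5},{0,1},{0,2},{1,3}}" by simp
    also have "\<dots> = {{0::7,1},{0,2},{1,3},{4,5}}" by (simp only: insert_commute)
    finally show "nd 4 ((`) (\<lambda>z::7. sel7 z 0 1 2 3 4 5 (6::7)) ` (insert {4,5} {{0::7,1},{0,2},{1,3}}))" by (simp only: nd16)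
  qed
  have f_4_5': "nd 4 (insert {5,4} {{0::7,1},{0,2},{1,3}})" unfolding insert_commute[of "5::7" "4" "{}"] by (rule f_4_5)
  show "nd 4 (insert {a,b} {{0::7,1},{0,2},{1,3}})"
  proof (cases "a \<in> ({0,1,2,3}::7 set)")
    case aV: True
    show ?thesis
    proof (cases "b \<in> ({0,1,2,3}::7 set)")
      case bV: True
      from aV bV ab show ?thesis by (elim insertE emptyE) (simp_all add: f_0_3 f_0_3' f_1_2 f_1_2' f_2_3 f_2_3' f_0_4 f_0_4' f_1_4 f_1_4' f_2_4 f_2_4' f_3_4 f_3_4' f_4_5 f_4_5' doubleton_eq_iff)
    next
      case bV: False
      have X: "nd 4 (insert {a,4} {{0::7,1},{0,2},{1,3}})" using aV by (elim insertE emptyE) (simp_all add: f_0_3 f_0_3' f_1_2 f_1_2' f_2_3 f_2_3' f_0_4 f_0_4' f_1_4 f_1_4' f_2_4 f_2_4' f_3_4 f_3_4' f_4_5 f_4_5')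
      show ?thesis by (rule nd_new1[OF KV aV bV _ X]) simp
    qed
  next
    case aV: False
    show ?thesis
    proof (cases "b \<in> ({0,1,2,3}::7 set)")
      case bV: True
      have X: "nd 4 (insert {b,4} {{0::7,1},{0,2},{1,3}})" using bV by (elim insertE emptyE) (simp_all add: f_0_3 f_0_3' f_1_2 f_1_2' f_2_3 f_2_3' f_0_4 f_0_4' f_1_4 f_1_4' f_2_4 f_2_4' f_3_4 f_3_4' f_4_5 f_4_5')
      have "nd 4 (insert {b,a} {{0::7,1},{0,2},{1,3}})" by (rule nd_new1[OF KV bV aV _ X]) simp
      then show ?thesis by (simp add: insert_commute)
    next
      case bV: False
      show ?thesis by (rule nd_new2[OF KV aV bV ab(1) _ _ _ f_4_5]) simp_all
    qed
  qed
qed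

lemma nd7: "nd 3 {{0::7,1},{0,2},{3,4}}"
proof (rule nd_intro_3)
  show "good {{0::7,1},{0,2},{3,4}}" by (rule good7)
next
  fix a b :: 7
  assume ab: "a \<noteq> b" "{a,b} \<notin> {{0::7,1},{0,2},{3,4}}"
  have KV: "\<forall>e\<in>{{0::7,1},{0,2},{3,4}}. e \<subseteq> ({0,1,2,3,4}::7 set)" by simp
  have f_0_3: "nd 4 (insert {0,3} {{0::7,1},{0,2},{3,4}})"
  proof (rule nd_perm[OF bij_sel7[of 0 2 3 1 4 5 6 0 3 1 2 4 5 6]])
    show "\<forall>x. sel7 (sel7 x 0 2 3 1 4 5 6) 0 3 1 2 4 5 6 = x" by (simp add: all7)
    have "(`) (\<lambda>z::7. sel7 z 0 2 3 1 4 5 (6::7)) ` (insert {0,3} {{0::7,1},{0,2},{3,4}}) = {{0::7,1},{0,2},{0,3},{1,4}}" by simp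
    then show "nd 4 ((`) (\<lambda>z::7. sel7 z 0 2 3 1 4 5 (6::7)) ` (insert {0,3} {{0::7,1},{0,2},{3,4}}))" by (simp only: nd11)
  qed
  have f_0_3': "nd 4 (insert {3,0} {{0::7,1},{0,2},{3,4}})" unfolding insert_commute[of "3::7" "0" "{}"] by (rule f_0_3)
  have f_0_4: "nd 4 (insert {0,4} {{0::7,1},{0,2},{3,4}})"
  proof (rule nd_perm[OF bij_sel7[of 0 2 3 4 1 5 6 0 4 1 2 3 5 6]])
    show "\<forall>x. sel7 (sel7 x 0 2 3 4 1 5 6) 0 4 1 2 3 5 6 = x" by (simp add: all7)
    have "(`) (\<lambda>z::7. sel7 z 0 2 3 4 1 5 (6::7)) ` (insert {0,4} {{0::7,1},{0,2},{3,4}}) = {{0::7,1},{0,2},{0,3},{4,1}}" by simp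
    also have "\<dots> = {{0::7,1},{0,2},{0,3},{1,4}}" by (simp only: insert_commute)
    finally show "nd 4 ((`) (\<lambda>z::7. sel7 z 0 2 3 4 1 5 (6::7)) ` (insert {0,4} {{0::7,1},{0,2},{3,4}}))" by (simp only: nd11)
  qed
  have f_0_4': "nd 4 (insert {4,0} {{0::7,1},{0,2},{3,4}})" unfolding insert_commute[of "4::7" "0" "{}"] by (rule f_0_4)
  have f_1_2: "nd 4 (insert {1,2} {{0::7,1},{0,2},{3,4}})"
  proof (rule nd_perm[OF bij_sel7[of 0 1 2 3 4 5 6 0 1 2 3 4 5 6]])
    show "\<forall>x. sel7 (sel7 x 0 1 2 3 4 5 6) 0 1 2 3 4 5 6 = x" by (simp add: all7)
    have "(`) (\<lambda>z::7. sel7 z 0 1 2 3 4 5 (6::7)) ` (insert {1,2} {{0::7,1},{0,2},{3,4}}) = {{1::7,2},{0,1},{0,2},{3,4}}" by simp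
    also have "\<dots> = {{0::7,1},{0,2},{1,2},{3,4}}" by (simp only: insert_commute)
    finally show "nd 4 ((`) (\<lambda>z::7. sel7 z 0 1 2 3 4 5 (6::7)) ` (insert {1,2} {{0::7,1},{0,2},{3,4}}))" by (simp only: nd13)
  qed
  have f_1_2': "nd 4 (insert {2,1} {{0::7,1},{0,2},{3,4}})" unfolding insert_commute[of "2::7" "1" "{}"] by (rule f_1_2)
  have f_1_3: "nd 4 (insert {1,3} {{0::7,1},{0,2},{3,4}})"
  proof (rule nd_perm[OF bij_sel7[of 1 0 3 2 4 5 6 1 0 3 2 4 5 6]])
    show "\<forall>x. sel7 (sel7 x 1 0 3 2 4 5 6) 1 0 3 2 4 5 6 = x" by (simp add: all7)
    have "(`) (\<lambda>z::7. sel7 z 1 0 3 2 4 5 (6::7)) ` (insert {1,3} {{0::7,1},{0,2},{3,4}}) = {{0::7,2},{1,0},{1,3},{2,4}}" by simp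
    also have "\<dots> = {{0::7,1},{0,2},{1,3},{2,4}}" by (simp only: insert_commute)
    finally show "nd 4 ((`) (\<lambda>z::7. sel7 z 1 0 3 2 4 5 (6::7)) ` (insert {1,3} {{0::7,1},{0,2},{3,4}}))" by (simp only: nd15)
  qed
  have f_1_3': "nd 4 (insert {3,1} {{0::7,1},{0,2},{3,4}})" unfolding insert_commute[of "3::7" "1" "{}"] by (rule f_1_3)
  have f_1_4: "nd 4 (insert {1,4} {{0::7,1},{0,2},{3,4}})"
  proof (rule nd_perm[OF bij_sel7[of 1 0 3 4 2 5 6 1 0 4 2 3 5 6]])
    show "\<forall>x. sel7 (sel7 x 1 0 3 4 2 5 6) 1 0 4 2 3 5 6 = x" by (simp add: all7)
    have "(`) (\<lambda>z::7. sel7 z 1 0 3 4 2 5 (6::7)) ` (insert {1,4} {{0::7,1},{0,2},{3,4}}) = {{0::7,2},{1,0},{1,3},{4,2}}" by simp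
    also have "\<dots> = {{0::7,1},{0,2},{1,3},{2,4}}" by (simp only: insert_commute)
    finally show "nd 4 ((`) (\<lambda>z::7. sel7 z 1 0 3 4 2 5 (6::7)) ` (insert {1,4} {{0::7,1},{0,2},{3,4}}))" by (simp only: nd15)
  qed
  have f_1_4': "nd 4 (insert {4,1} {{0::7,1},{0,2},{3,4}})" unfolding insert_commute[of "4::7" "1" "{}"] by (rule f_1_4)
  have f_2_3: "nd 4 (insert {2,3} {{0::7,1},{0,2},{3,4}})"
  proof (rule nd_perm[OF bij_sel7[of 1 3 0 2 4 5 6 2 0 3 1 4 5 6]])
    show "\<forall>x. sel7 (sel7 x 1 3 0 2 4 5 6) 2 0 3 1 4 5 6 = x" by (simp add: all7)
    have "(`) (\<lambda>z::7. sel7 z 1 3 0 2 4 5 (6::7)) ` (insert {2,3} {{0::7,1},{0,2},{3,4}}) = {{0::7,2},{1,3},{1,0},{2,4}}" by simp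
    also have "\<dots> = {{0::7,1},{0,2},{1,3},{2,4}}" by (simp only: insert_commute)
    finally show "nd 4 ((`) (\<lambda>z::7. sel7 z 1 3 0 2 4 5 (6::7)) ` (insert {2,3} {{0::7,1},{0,2},{3,4}}))" by (simp only: nd15)
  qed
  have f_2_3': "nd 4 (insert {3,2} {{0::7,1},{0,2},{3,4}})" unfolding insert_commute[of "3::7" "2" "{}"] by (rule f_2_3)
  have f_2_4: "nd 4 (insert {2,4} {{0::7,1},{0,2},{3,4}})"
  proof (rule nd_perm[OF bij_sel7[of 1 3 0 4 2 5 6 2 0 4 1 3 5 6]])
    show "\<forall>x. sel7 (sel7 x 1 3 0 4 2 5 6) 2 0 4 1 3 5 6 = x" by (simp add: all7)
    have "(`) (\<lambda>z::7. sel7 z 1 3 0 4 2 5 (6::7)) ` (insert {2,4} {{0::7,1},{0,2},{3,4}}) = {{0::7,2},{1,3},{1,0},{4,2}}" by simp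
    also have "\<dots> = {{0::7,1},{0,2},{1,3},{2,4}}" by (simp only: insert_commute)
    finally show "nd 4 ((`) (\<lambda>z::7. sel7 z 1 3 0 4 2 5 (6::7)) ` (insert {2,4} {{0::7,1},{0,2},{3,4}}))" by (simp only: nd15)
  qed
  have f_2_4': "nd 4 (insert {4,2} {{0::7,1},{0,2},{3,4}})" unfolding insert_commute[of "4::7" "2" "{}"] by (rule f_2_4)
  have f_0_5: "nd 4 (insert {0,5} {{0::7,1},{0,2},{3,4}})"
  proof (rule nd_perm[OF bij_sel7[of 0 1 2 4 5 3 6 0 1 2 5 3 4 6]])
    show "\<forall>x. sel7 (sel7 x 0 1 2 4 5 3 6) 0 1 2 5 3 4 6 = x" by (simp add: all7)
    have "(`) (\<lambda>z::7. sel7 z 0 1 2 4 5 3 (6::7)) ` (insert {0,5} {{0::7,1},{0,2},{3,4}}) = {{0::7,3},{0,1},{0,2},{4,5}}" by simp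
    also have "\<dots> = {{0::7,1},{0,2},{0,3},{4,5}}" by (simp only: insert_commute)
    finally show "nd 4 ((`) (\<lambda>z::7. sel7 z 0 1 2 4 5 3 (6::7)) ` (insert {0,5} {{0::7,1},{0,2},{3,4}}))" by (simp only: nd12)
  qed
  have f_0_5': "nd 4 (insert {5,0} {{0::7,1},{0,2},{3,4}})" unfolding insert_commute[of "5::7" "0" "{}"] by (rule f_0_5)
  have f_1_5: "nd 4 (insert {1,5} {{0::7,1},{0,2},{3,4}})"
  proof (rule nd_perm[OF bij_sel7[of 0 1 2 4 5 3 6 0 1 2 5 3 4 6]])
    show "\<forall>x. sel7 (sel7 x 0 1 2 4 5 3 6) 0 1 2 5 3 4 6 = x" by (simp add: all7)
    have "(`) (\<lambda>z::7. sel7 z 0 1 2 4 5 3 (6::7)) ` (insert {1,5} {{0::7,1},{0,2},{3,4}}) = {{1::7,3},{0,1},{0,2},{4,5}}" by simp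
    also have "\<dots> = {{0::7,1},{0,2},{1,3},{4,5}}" by (simp only: insert_commute)
    finally show "nd 4 ((`) (\<lambda>z::7. sel7 z 0 1 2 4 5 3 (6::7)) ` (insert {1,5} {{0::7,1},{0,2},{3,4}}))" by (simp only: nd16)
  qed
  have f_1_5': "nd 4 (insert {5,1} {{0::7,1},{0,2},{3,4}})" unfolding insert_commute[of "5::7" "1" "{}"] by (rule f_1_5)
  have f_2_5: "nd 4 (insert {2,5} {{0::7,1},{0,2},{3,4}})"
  proof (rule nd_perm[OF bij_sel7[of 0 2 1 4 5 3 6 0 2 1 5 3 4 6]])
    show "\<forall>x. sel7 (sel7 x 0 2 1 4 5 3 6) 0 2 1 5 3 4 6 = x" by (simp add: all7)
    have "(`) (\<lambda>z::7. sel7 z 0 2 1 4 5 3 (6::7)) ` (insert {2,5} {{0::7,1},{0,2},{3,4}}) = {{1::7,3},{0,2},{0,1},{4,5}}" by simp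
    also have "\<dots> = {{0::7,1},{0,2},{1,3},{4,5}}" by (simp only: insert_commute)
    finally show "nd 4 ((`) (\<lambda>z::7. sel7 z 0 2 1 4 5 3 (6::7)) ` (insert {2,5} {{0::7,1},{0,2},{3,4}}))" by (simp only: nd16)
  qed
  have f_2_5': "nd 4 (insert {5,2} {{0::7,1},{0,2},{3,4}})" unfolding insert_commute[of "5::7" "2" "{}"] by (rule f_2_5)
  have f_3_5: "nd 4 (insert {3,5} {{0::7,1},{0,2},{3,4}})"
  proof (rule nd_perm[OF bij_sel7[of 0 1 2 3 4 5 6 0 1 2 3 4 5 6]])
    show "\<forall>x. sel7 (sel7 x 0 1 2 3 4 5 6) 0 1 2 3 4 5 6 = x" by (simp add: all7)
    have "(`) (\<lambda>z::7. sel7 z 0 1 2 3 4 5 (6::7)) ` (insert {3,5} {{0::7,1},{0,2},{3,4}}) = {{3::7,5},{0,1},{0,2},{3,4}}" by simp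
    also have "\<dots> = {{0::7,1},{0,2},{3,4},{3,5}}" by (simp only: insert_commute)
    finally show "nd 4 ((`) (\<lambda>z::7. sel7 z 0 1 2 3 4 5 (6::7)) ` (insert {3,5} {{0::7,1},{0,2},{3,4}}))" by (simp only: nd17)
  qed
  have f_3_5': "nd 4 (insert {5,3} {{0::7,1},{0,2},{3,4}})" unfolding insert_commute[of "5::7" "3" "{}"] by (rule f_3_5)
  have f_4_5: "nd 4 (insert {4,5} {{0::7,1},{0,2},{3,4}})"
  proof (rule nd_perm[OF bij_sel7[of 0 1 2 4 3 5 6 0 1 2 4 3 5 6]])
    show "\<forall>x. sel7 (sel7 x 0 1 2 4 3 5 6) 0 1 2 4 3 5 6 = x" by (simp add: all7)
    have "(`) (\<lambda>z::7. sel7 z 0 1 2 4 3 5 (6::7)) ` (insert {4,5} {{0::7,1},{0,2},{3,4}}) = {{3::7,5},{0,1},{0,2},{4,3}}" by simp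
    also have "\<dots> = {{0::7,1},{0,2},{3,4},{3,5}}" by (simp only: insert_commute)
    finally show "nd 4 ((`) (\<lambda>z::7. sel7 z 0 1 2 4 3 5 (6::7)) ` (insert {4,5} {{0::7,1},{0,2},{3,4}}))" by (simp only: nd17)
  qed
  have f_4_5': "nd 4 (insert {5,4} {{0::7,1},{0,2},{3,4}})" unfolding insert_commute[of "5::7" "4" "{}"] by (rule f_4_5)
  have f_5_6: "nd 4 (insert {5,6} {{0::7,1},{0,2},{3,4}})"
  proof (rule nd_perm[OF bij_sel7[of 0 1 2 3 4 5 6 0 1 2 3 4 5 6]])
    show "\<forall>x. sel7 (sel7 x 0 1 2 3 4 5 6) 0 1 2 3 4 5 6 = x" by (simp add: all7)
    have "(`) (\<lambda>z::7. sel7 z 0 1 2 3 4 5 (6::7)) ` (insert {5,6} {{0::7,1},{0,2},{3,4}}) = {{5::7,6},{0,1},{0,2},{3,4}}" by simp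
    also have "\<dots> = {{0::7,1},{0,2},{3,4},{5,6}}" by (simp only: insert_commute)
    finally show "nd 4 ((`) (\<lambda>z::7. sel7 z 0 1 2 3 4 5 (6::7)) ` (insert {5,6} {{0::7,1},{0,2},{3,4}}))" by (simp only: nd18)
  qed
  have f_5_6': "nd 4 (insert {6,5} {{0::7,1},{0,2},{3,4}})" unfolding insert_commute[of "6::7" "5" "{}"] by (rule f_5_6)
  show "nd 4 (insert {a,b} {{0::7,1},{0,2},{3,4}})"
  proof (cases "a \<in> ({0,1,2,3,4}::7 set)")
    case aV: True
    show ?thesis
    proof (cases "b \<in> ({0,1,2,3,4}::7 set)")
      case bV: True
      from aV bV ab show ?thesis by (elim insertE emptyE) (simp_all add: f_0_3 f_0_3' f_0_4 f_0_4' f_1_2 f_1_2' f_1_3 f_1_3' f_1_4 f_1_4' f_2_3 f_2_3' f_2_4 f_2_4' f_0_5 f_0_5' f_1_5 f_1_5' f_2_5 f_2_5' f_3_5 f_3_5' f_4_5 f_4_5' f_5_6 f_5_6' doubleton_eq_iff)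
    next
      case bV: False
      have X: "nd 4 (insert {a,5} {{0::7,1},{0,2},{3,4}})" using aV by (elim insertE emptyE) (simp_all add: f_0_3 f_0_3' f_0_4 f_0_4' f_1_2 f_1_2' f_1_3 f_1_3' f_1_4 f_1_4' f_2_3 f_2_3' f_2_4 f_2_4' f_0_5 f_0_5' f_1_5 f_1_5' f_2_5 f_2_5' f_3_5 f_3_5' f_4_5 f_4_5' f_5_6 f_5_6')
      show ?thesis by (rule nd_new1[OF KV aV bV _ X]) simp
    qed
  next
    case aV: False
    show ?thesis
    proof (cases "b \<in> ({0,1,2,3,4}::7 set)")
      case bV: True
      have X: "nd 4 (insert {b,5} {{0::7,1},{0,2},{3,4}})" using bV by (elim insertE emptyE) (simp_all add: f_0_3 f_0_3' f_0_4 f_0_4' f_1_2 f_1_2' f_1_3 f_1_3' f_1_4 f_1_4' f_2_3 f_2_3' f_2_4 f_2_4' f_0_5 f_0_5' f_1_5 f_1_5' f_2_5 f_2_5' f_3_5 f_3_5' f_4_5 f_4_5' f_5_6 f_5_6')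
      have "nd 4 (insert {b,a} {{0::7,1},{0,2},{3,4}})" by (rule nd_new1[OF KV bV aV _ X]) simp
      then show ?thesis by (simp add: insert_commute)
    next
      case bV: False
      show ?thesis by (rule nd_new2[OF KV aV bV ab(1) _ _ _ f_5_6]) simp_all
    qed
  qed
qed

lemma nd8: "nd 3 {{0::7,1},{2,3},{4,5}}"
proof (rule nd_intro_3)
  show "good {{0::7,1},{2,3},{4,5}}" by (rule good8)
next
  fix a b :: 7
  assume ab: "a \<noteq> b" "{a,b} \<notin> {{0::7,1},{2,3},{4,5}}"
  have KV: "\<forall>e\<in>{{0::7,1},{2,3},{4,5}}. e \<subseteq> ({0,1,2,3,4,5}::7 set)" by simp
  have f_0_2: "nd 4 (insert {0,2} {{0::7,1},{2,3},{4,5}})"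
  proof (rule nd_perm[OF bij_sel7[of 0 2 1 3 4 5 6 0 2 1 3 4 5 6]])
    show "\<forall>x. sel7 (sel7 x 0 2 1 3 4 5 6) 0 2 1 3 4 5 6 = x" by (simp add: all7)
    have "(`) (\<lambda>z::7. sel7 z 0 2 1 3 4 5 (6::7)) ` (insert {0,2} {{0::7,1},{2,3},{4,5}}) = {{0::7,1},{0,2},{1,3},{4,5}}" by simp
    then show "nd 4 ((`) (\<lambda>z::7. sel7 z 0 2 1 3 4 5 (6::7)) ` (insert {0,2} {{0::7,1},{2,3},{4,5}}))" by (simp only: nd16)
  qed
  have f_0_2': "nd 4 (insert {2,0} {{0::7,1},{2,3},{4,5}})" unfolding insert_commute[of "2::7" "0" "{}"] by (rule f_0_2)
  have f_0_3: "nd 4 (insert {0,3} {{0::7,1},{2,3},{4,5}})"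
  proof (rule nd_perm[OF bij_sel7[of 0 2 3 1 4 5 6 0 3 1 2 4 5 6]])
    show "\<forall>x. sel7 (sel7 x 0 2 3 1 4 5 6) 0 3 1 2 4 5 6 = x" by (simp add: all7)
    have "(`) (\<lambda>z::7. sel7 z 0 2 3 1 4 5 (6::7)) ` (insert {0,3} {{0::7,1},{2,3},{4,5}}) = {{0::7,1},{0,2},{3,1},{4,5}}" by simp
    also have "\<dots> = {{0::7,1},{0,2},{1,3},{4,5}}" by (simp only: insert_commute)
    finally show "nd 4 ((`) (\<lambda>z::7. sel7 z 0 2 3 1 4 5 (6::7)) ` (insert {0,3} {{0::7,1},{2,3},{4,5}}))" by (simp only: nd16)
  qed
  have f_0_3': "nd 4 (insert {3,0} {{0::7,1},{2,3},{4,5}})" unfolding insert_commute[of "3::7" "0" "{}"] by (rule f_0_3)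
  have f_0_4: "nd 4 (insert {0,4} {{0::7,1},{2,3},{4,5}})"
  proof (rule nd_perm[OF bij_sel7[of 0 2 4 5 1 3 6 0 4 1 5 2 3 6]])
    show "\<forall>x. sel7 (sel7 x 0 2 4 5 1 3 6) 0 4 1 5 2 3 6 = x" by (simp add: all7)
    have "(`) (\<lambda>z::7. sel7 z 0 2 4 5 1 3 (6::7)) ` (insert {0,4} {{0::7,1},{2,3},{4,5}}) = {{0::7,1},{0,2},{4,5},{1,3}}" by simp
    also have "\<dots> = {{0::7,1},{0,2},{1,3},{4,5}}" by (simp only: insert_commute)
    finally show "nd 4 ((`) (\<lambda>z::7. sel7 z 0 2 4 5 1 3 (6::7)) ` (insert {0,4} {{0::7,1},{2,3},{4,5}}))" by (simp only: nd16)
  qed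
  have f_0_4': "nd 4 (insert {4,0} {{0::7,1},{2,3},{4,5}})" unfolding insert_commute[of "4::7" "0" "{}"] by (rule f_0_4)
  have f_0_5: "nd 4 (insert {0,5} {{0::7,1},{2,3},{4,5}})"
  proof (rule nd_perm[OF bij_sel7[of 0 2 4 5 3 1 6 0 5 1 4 2 3 6]])
    show "\<forall>x. sel7 (sel7 x 0 2 4 5 3 1 6) 0 5 1 4 2 3 6 = x" by (simp add: all7)
    have "(`) (\<lambda>z::7. sel7 z 0 2 4 5 3 1 (6::7)) ` (insert {0,5} {{0::7,1},{2,3},{4,5}}) = {{0::7,1},{0,2},{4,5},{3,1}}" by simp
    also have "\<dots> = {{0::7,1},{0,2},{1,3},{4,5}}" by (simp only: insert_commute)
    finally show "nd 4 ((`) (\<lambda>z::7. sel7 z 0 2 4 5 3 1 (6::7)) ` (insert {0,5} {{0::7,1},{2,3},{4,5}}))" by (simp only: nd16)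
  qed
  have f_0_5': "nd 4 (insert {5,0} {{0::7,1},{2,3},{4,5}})" unfolding insert_commute[of "5::7" "0" "{}"] by (rule f_0_5)
  have f_1_2: "nd 4 (insert {1,2} {{0::7,1},{2,3},{4,5}})"
  proof (rule nd_perm[OF bij_sel7[of 2 0 1 3 4 5 6 1 2 0 3 4 5 6]])
    show "\<forall>x. sel7 (sel7 x 2 0 1 3 4 5 6) 1 2 0 3 4 5 6 = x" by (simp add: all7)
    have "(`) (\<lambda>z::7. sel7 z 2 0 1 3 4 5 (6::7)) ` (insert {1,2} {{0::7,1},{2,3},{4,5}}) = {{0::7,1},{2,0},{1,3},{4,5}}" by simp
    also have "\<dots> = {{0::7,1},{0,2},{1,3},{4,5}}" by (simp only: insert_commute)
    finally show "nd 4 ((`) (\<lambda>z::7. sel7 z 2 0 1 3 4 5 (6::7)) ` (insert {1,2} {{0::7,1},{2,3},{4,5}}))" by (simp only: nd16)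
  qed
  have f_1_2': "nd 4 (insert {2,1} {{0::7,1},{2,3},{4,5}})" unfolding insert_commute[of "2::7" "1" "{}"] by (rule f_1_2)
  have f_1_3: "nd 4 (insert {1,3} {{0::7,1},{2,3},{4,5}})"
  proof (rule nd_perm[OF bij_sel7[of 2 0 3 1 4 5 6 1 3 0 2 4 5 6]])
    show "\<forall>x. sel7 (sel7 x 2 0 3 1 4 5 6) 1 3 0 2 4 5 6 = x" by (simp add: all7)
    have "(`) (\<lambda>z::7. sel7 z 2 0 3 1 4 5 (6::7)) ` (insert {1,3} {{0::7,1},{2,3},{4,5}}) = {{0::7,1},{2,0},{3,1},{4,5}}" by simp
    also have "\<dots> = {{0::7,1},{0,2},{1,3},{4,5}}" by (simp only: insert_commute)
    finally show "nd 4 ((`) (\<lambda>z::7. sel7 z 2 0 3 1 4 5 (6::7)) ` (insert {1,3} {{0::7,1},{2,3},{4,5}}))" by (simp only: nd16)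
  qed
  have f_1_3': "nd 4 (insert {3,1} {{0::7,1},{2,3},{4,5}})" unfolding insert_commute[of "3::7" "1" "{}"] by (rule f_1_3)
  have f_1_4: "nd 4 (insert {1,4} {{0::7,1},{2,3},{4,5}})"
  proof (rule nd_perm[OF bij_sel7[of 2 0 4 5 1 3 6 1 4 0 5 2 3 6]])
    show "\<forall>x. sel7 (sel7 x 2 0 4 5 1 3 6) 1 4 0 5 2 3 6 = x" by (simp add: all7)
    have "(`) (\<lambda>z::7. sel7 z 2 0 4 5 1 3 (6::7)) ` (insert {1,4} {{0::7,1},{2,3},{4,5}}) = {{0::7,1},{2,0},{4,5},{1,3}}" by simp
    also have "\<dots> = {{0::7,1},{0,2},{1,3},{4,5}}" by (simp only: insert_commute)
    finally show "nd 4 ((`) (\<lambda>z::7. sel7 z 2 0 4 5 1 3 (6::7)) ` (insert {1,4} {{0::7,1},{2,3},{4,5}}))" by (simp only: nd16)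
  qed
  have f_1_4': "nd 4 (insert {4,1} {{0::7,1},{2,3},{4,5}})" unfolding insert_commute[of "4::7" "1" "{}"] by (rule f_1_4)
  have f_1_5: "nd 4 (insert {1,5} {{0::7,1},{2,3},{4,5}})"
  proof (rule nd_perm[OF bij_sel7[of 2 0 4 5 3 1 6 1 5 0 4 2 3 6]])
    show "\<forall>x. sel7 (sel7 x 2 0 4 5 3 1 6) 1 5 0 4 2 3 6 = x" by (simp add: all7)
    have "(`) (\<lambda>z::7. sel7 z 2 0 4 5 3 1 (6::7)) ` (insert {1,5} {{0::7,1},{2,3},{4,5}}) = {{0::7,1},{2,0},{4,5},{3,1}}" by simp
    also have "\<dots> = {{0::7,1},{0,2},{1,3},{4,5}}" by (simp only: insert_commute)
    finally show "nd 4 ((`) (\<lambda>z::7. sel7 z 2 0 4 5 3 1 (6::7)) ` (insert {1,5} {{0::7,1},{2,3},{4,5}}))" by (simp only: nd16)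
  qed
  have f_1_5': "nd 4 (insert {5,1} {{0::7,1},{2,3},{4,5}})" unfolding insert_commute[of "5::7" "1" "{}"] by (rule f_1_5)
  have f_2_4: "nd 4 (insert {2,4} {{0::7,1},{2,3},{4,5}})"
  proof (rule nd_perm[OF bij_sel7[of 4 5 0 2 1 3 6 2 4 3 5 0 1 6]])
    show "\<forall>x. sel7 (sel7 x 4 5 0 2 1 3 6) 2 4 3 5 0 1 6 = x" by (simp add: all7)
    have "(`) (\<lambda>z::7. sel7 z 4 5 0 2 1 3 (6::7)) ` (insert {2,4} {{0::7,1},{2,3},{4,5}}) = {{0::7,1},{4,5},{0,2},{1,3}}" by simp
    also have "\<dots> = {{0::7,1},{0,2},{1,3},{4,5}}" by (simp only: insert_commute)
    finally show "nd 4 ((`) (\<lambda>z::7. sel7 z 4 5 0 2 1 3 (6::7)) ` (insert {2,4} {{0::7,1},{2,3},{4,5}}))" by (simp only: nd16)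
  qed
  have f_2_4': "nd 4 (insert {4,2} {{0::7,1},{2,3},{4,5}})" unfolding insert_commute[of "4::7" "2" "{}"] by (rule f_2_4)
  have f_2_5: "nd 4 (insert {2,5} {{0::7,1},{2,3},{4,5}})"
  proof (rule nd_perm[OF bij_sel7[of 4 5 0 2 3 1 6 2 5 3 4 0 1 6]])
    show "\<forall>x. sel7 (sel7 x 4 5 0 2 3 1 6) 2 5 3 4 0 1 6 = x" by (simp add: all7)
    have "(`) (\<lambda>z::7. sel7 z 4 5 0 2 3 1 (6::7)) ` (insert {2,5} {{0::7,1},{2,3},{4,5}}) = {{0::7,1},{4,5},{0,2},{3,1}}" by simp
    also have "\<dots> = {{0::7,1},{0,2},{1,3},{4,5}}" by (simp only: insert_commute)
    finally show "nd 4 ((`) (\<lambda>z::7. sel7 z 4 5 0 2 3 1 (6::7)) ` (insert {2,5} {{0::7,1},{2,3},{4,5}}))" by (simp only: nd16)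
  qed
  have f_2_5': "nd 4 (insert {5,2} {{0::7,1},{2,3},{4,5}})" unfolding insert_commute[of "5::7" "2" "{}"] by (rule f_2_5)
  have f_3_4: "nd 4 (insert {3,4} {{0::7,1},{2,3},{4,5}})"
  proof (rule nd_perm[OF bij_sel7[of 4 5 2 0 1 3 6 3 4 2 5 0 1 6]])
    show "\<forall>x. sel7 (sel7 x 4 5 2 0 1 3 6) 3 4 2 5 0 1 6 = x" by (simp add: all7)
    have "(`) (\<lambda>z::7. sel7 z 4 5 2 0 1 3 (6::7)) ` (insert {3,4} {{0::7,1},{2,3},{4,5}}) = {{0::7,1},{4,5},{2,0},{1,3}}" by simp
    also have "\<dots> = {{0::7,1},{0,2},{1,3},{4,5}}" by (simp only: insert_commute)
    finally show "nd 4 ((`) (\<lambda>z::7. sel7 z 4 5 2 0 1 3 (6::7)) ` (insert {3,4} {{0::7,1},{2,3},{4,5}}))" by (simp only: nd16)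
  qed
  have f_3_4': "nd 4 (insert {4,3} {{0::7,1},{2,3},{4,5}})" unfolding insert_commute[of "4::7" "3" "{}"] by (rule f_3_4)
  have f_3_5: "nd 4 (insert {3,5} {{0::7,1},{2,3},{4,5}})"
  proof (rule nd_perm[OF bij_sel7[of 4 5 2 0 3 1 6 3 5 2 4 0 1 6]])
    show "\<forall>x. sel7 (sel7 x 4 5 2 0 3 1 6) 3 5 2 4 0 1 6 = x" by (simp add: all7)
    have "(`) (\<lambda>z::7. sel7 z 4 5 2 0 3 1 (6::7)) ` (insert {3,5} {{0::7,1},{2,3},{4,5}}) = {{0::7,1},{4,5},{2,0},{3,1}}" by simp
    also have "\<dots> = {{0::7,1},{0,2},{1,3},{4,5}}" by (simp only: insert_commute)
    finally show "nd 4 ((`) (\<lambda>z::7. sel7 z 4 5 2 0 3 1 (6::7)) ` (insert {3,5} {{0::7,1},{2,3},{4,5}}))" by (simp only: nd16)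
  qed
  have f_3_5': "nd 4 (insert {5,3} {{0::7,1},{2,3},{4,5}})" unfolding insert_commute[of "5::7" "3" "{}"] by (rule f_3_5)
  have f_0_6: "nd 4 (insert {0,6} {{0::7,1},{2,3},{4,5}})"
  proof (rule nd_perm[OF bij_sel7[of 0 1 3 4 5 6 2 0 1 6 2 3 4 5]])
    show "\<forall>x. sel7 (sel7 x 0 1 3 4 5 6 2) 0 1 6 2 3 4 5 = x" by (simp add: all7)
    have "(`) (\<lambda>z::7. sel7 z 0 1 3 4 5 6 (2::7)) ` (insert {0,6} {{0::7,1},{2,3},{4,5}}) = {{0::7,2},{0,1},{3,4},{5,6}}" by simp
    also have "\<dots> = {{0::7,1},{0,2},{3,4},{5,6}}" by (simp only: insert_commute)
    finally show "nd 4 ((`) (\<lambda>z::7. sel7 z 0 1 3 4 5 6 (2::7)) ` (insert {0,6} {{0::7,1},{2,3},{4,5}}))" by (simp only: nd18)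
  qed
  have f_0_6': "nd 4 (insert {6,0} {{0::7,1},{2,3},{4,5}})" unfolding insert_commute[of "6::7" "0" "{}"] by (rule f_0_6)
  have f_1_6: "nd 4 (insert {1,6} {{0::7,1},{2,3},{4,5}})"
  proof (rule nd_perm[OF bij_sel7[of 1 0 3 4 5 6 2 1 0 6 2 3 4 5]])
    show "\<forall>x. sel7 (sel7 x 1 0 3 4 5 6 2) 1 0 6 2 3 4 5 = x" by (simp add: all7)
    have "(`) (\<lambda>z::7. sel7 z 1 0 3 4 5 6 (2::7)) ` (insert {1,6} {{0::7,1},{2,3},{4,5}}) = {{0::7,2},{1,0},{3,4},{5,6}}" by simp
    also have "\<dots> = {{0::7,1},{0,2},{3,4},{5,6}}" by (simp only: insert_commute)
    finally show "nd 4 ((`) (\<lambda>z::7. sel7 z 1 0 3 4 5 6 (2::7)) ` (insert {1,6} {{0::7,1},{2,3},{4,5}}))" by (simp only: nd18)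
  qed
  have f_1_6': "nd 4 (insert {6,1} {{0::7,1},{2,3},{4,5}})" unfolding insert_commute[of "6::7" "1" "{}"] by (rule f_1_6)
  have f_2_6: "nd 4 (insert {2,6} {{0::7,1},{2,3},{4,5}})"
  proof (rule nd_perm[OF bij_sel7[of 3 4 0 1 5 6 2 2 3 6 0 1 4 5]])
    show "\<forall>x. sel7 (sel7 x 3 4 0 1 5 6 2) 2 3 6 0 1 4 5 = x" by (simp add: all7)
    have "(`) (\<lambda>z::7. sel7 z 3 4 0 1 5 6 (2::7)) ` (insert {2,6} {{0::7,1},{2,3},{4,5}}) = {{0::7,2},{3,4},{0,1},{5,6}}" by simp
    also have "\<dots> = {{0::7,1},{0,2},{3,4},{5,6}}" by (simp only: insert_commute)
    finally show "nd 4 ((`) (\<lambda>z::7. sel7 z 3 4 0 1 5 6 (2::7)) ` (insert {2,6} {{0::7,1},{2,3},{4,5}}))" by (simp only: nd18)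
  qed
  have f_2_6': "nd 4 (insert {6,2} {{0::7,1},{2,3},{4,5}})" unfolding insert_commute[of "6::7" "2" "{}"] by (rule f_2_6)
  have f_3_6: "nd 4 (insert {3,6} {{0::7,1},{2,3},{4,5}})"
  proof (rule nd_perm[OF bij_sel7[of 3 4 1 0 5 6 2 3 2 6 0 1 4 5]])
    show "\<forall>x. sel7 (sel7 x 3 4 1 0 5 6 2) 3 2 6 0 1 4 5 = x" by (simp add: all7)
    have "(`) (\<lambda>z::7. sel7 z 3 4 1 0 5 6 (2::7)) ` (insert {3,6} {{0::7,1},{2,3},{4,5}}) = {{0::7,2},{3,4},{1,0},{5,6}}" by simp
    also have "\<dots> = {{0::7,1},{0,2},{3,4},{5,6}}" by (simp only: insert_commute)
    finally show "nd 4 ((`) (\<lambda>z::7. sel7 z 3 4 1 0 5 6 (2::7)) ` (insert {3,6} {{0::7,1},{2,3},{4,5}}))" by (simp only: nd18)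
  qed
  have f_3_6': "nd 4 (insert {6,3} {{0::7,1},{2,3},{4,5}})" unfolding insert_commute[of "6::7" "3" "{}"] by (rule f_3_6)
  have f_4_6: "nd 4 (insert {4,6} {{0::7,1},{2,3},{4,5}})"
  proof (rule nd_perm[OF bij_sel7[of 3 4 5 6 0 1 2 4 5 6 0 1 2 3]])
    show "\<forall>x. sel7 (sel7 x 3 4 5 6 0 1 2) 4 5 6 0 1 2 3 = x" by (simp add: all7)
    have "(`) (\<lambda>z::7. sel7 z 3 4 5 6 0 1 (2::7)) ` (insert {4,6} {{0::7,1},{2,3},{4,5}}) = {{0::7,2},{3,4},{5,6},{0,1}}" by simp
    also have "\<dots> = {{0::7,1},{0,2},{3,4},{5,6}}" by (simp only: insert_commute)
    finally show "nd 4 ((`) (\<lambda>z::7. sel7 z 3 4 5 6 0 1 (2::7)) ` (insert {4,6} {{0::7,1},{2,3},{4,5}}))" by (simp only: nd18)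
  qed
  have f_4_6': "nd 4 (insert {6,4} {{0::7,1},{2,3},{4,5}})" unfolding insert_commute[of "6::7" "4" "{}"] by (rule f_4_6)
  have f_5_6: "nd 4 (insert {5,6} {{0::7,1},{2,3},{4,5}})"
  proof (rule nd_perm[OF bij_sel7[of 3 4 5 6 1 0 2 5 4 6 0 1 2 3]])
    show "\<forall>x. sel7 (sel7 x 3 4 5 6 1 0 2) 5 4 6 0 1 2 3 = x" by (simp add: all7)
    have "(`) (\<lambda>z::7. sel7 z 3 4 5 6 1 0 (2::7)) ` (insert {5,6} {{0::7,1},{2,3},{4,5}}) = {{0::7,2},{3,4},{5,6},{1,0}}" by simp
    also have "\<dots> = {{0::7,1},{0,2},{3,4},{5,6}}" by (simp only: insert_commute)
    finally show "nd 4 ((`) (\<lambda>z::7. sel7 z 3 4 5 6 1 0 (2::7)) ` (insert {5,6} {{0::7,1},{2,3},{4,5}}))" by (simp only: nd18)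
  qed
  have f_5_6': "nd 4 (insert {6,5} {{0::7,1},{2,3},{4,5}})" unfolding insert_commute[of "6::7" "5" "{}"] by (rule f_5_6)
  show "nd 4 (insert {a,b} {{0::7,1},{2,3},{4,5}})"
  proof (cases "a \<in> ({0,1,2,3,4,5}::7 set)")
    case aV: True
    show ?thesis
    proof (cases "b \<in> ({0,1,2,3,4,5}::7 set)")
      case bV: True
      from aV bV ab show ?thesis by (elim insertE emptyE) (simp_all add: f_0_2 f_0_2' f_0_3 f_0_3' f_0_4 f_0_4' f_0_5 f_0_5' f_1_2 f_1_2' f_1_3 f_1_3' f_1_4 f_1_4' f_1_5 f_1_5' f_2_4 f_2_4' f_2_5 f_2_5' f_3_4 f_3_4' f_3_5 f_3_5' f_0_6 f_0_6' f_1_6 f_1_6' f_2_6 f_2_6' f_3_6 f_3_6' f_4_6 f_4_6' f_5_6 f_5_6' doubleton_eq_iff)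
    next
      case bV: False
      have X: "nd 4 (insert {a,6} {{0::7,1},{2,3},{4,5}})" using aV by (elim insertE emptyE) (simp_all add: f_0_2 f_0_2' f_0_3 f_0_3' f_0_4 f_0_4' f_0_5 f_0_5' f_1_2 f_1_2' f_1_3 f_1_3' f_1_4 f_1_4' f_1_5 f_1_5' f_2_4 f_2_4' f_2_5 f_2_5' f_3_4 f_3_4' f_3_5 f_3_5' f_0_6 f_0_6' f_1_6 f_1_6' f_2_6 f_2_6' f_3_6 f_3_6' f_4_6 f_4_6' f_5_6 f_5_6')
      show ?thesis by (rule nd_new1[OF KV aV bV _ X]) simp
    qed
  next
    case aV: False
    show ?thesis
    proof (cases "b \<in> ({0,1,2,3,4,5}::7 set)")
      case bV: True
      have X: "nd 4 (insert {b,6} {{0::7,1},{2,3},{4,5}})" using bV by (elim insertE emptyE) (simp_all add: f_0_2 f_0_2' f_0_3 f_0_3' f_0_4 f_0_4' f_0_5 f_0_5' f_1_2 f_1_2' f_1_3 f_1_3' f_1_4 f_1_4' f_1_5 f_1_5' f_2_4 f_2_4' f_2_5 f_2_5' f_3_4 f_3_4' f_3_5 f_3_5' f_0_6 f_0_6' f_1_6 f_1_6' f_2_6 f_2_6' f_3_6 f_3_6' f_4_6 f_4_6' f_5_6 f_5_6')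
      have "nd 4 (insert {b,a} {{0::7,1},{2,3},{4,5}})" by (rule nd_new1[OF KV bV aV _ X]) simp
      then show ?thesis by (simp add: insert_commute)
    next
      case bV: False
      then show ?thesis using U7[of a] U7[of b] aV ab(1) by auto
    qed
  qed
qed

lemma nd2: "nd 2 {{0::7,1},{0,2}}"
proof (rule nd_intro_2)
  show "good {{0::7,1},{0,2}}" by (rule good2)
next
  fix a b :: 7
  assume ab: "a \<noteq> b" "{a,b} \<notin> {{0::7,1},{0,2}}"
  have KV: "\<forall>e\<in>{{0::7,1},{0,2}}. e \<subseteq> ({0,1,2}::7 set)" by simp
  have f_1_2: "nd 3 (insert {1,2} {{0::7,1},{0,2}})"
  proof (rule nd_perm[OF bij_sel7[of 0 1 2 3 4 5 6 0 1 2 3 4 5 6]])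
    show "\<forall>x. sel7 (sel7 x 0 1 2 3 4 5 6) 0 1 2 3 4 5 6 = x" by (simp add: all7)
    have "(`) (\<lambda>z::7. sel7 z 0 1 2 3 4 5 (6::7)) ` (insert {1,2} {{0::7,1},{0,2}}) = {{1::7,2},{0,1},{0,2}}" by simp
    also have "\<dots> = {{0::7,1},{0,2},{1,2}}" by (simp only: insert_commute)
    finally show "nd 3 ((`) (\<lambda>z::7. sel7 z 0 1 2 3 4 5 (6::7)) ` (insert {1,2} {{0::7,1},{0,2}}))" by (simp only: nd5)
  qed
  have f_1_2': "nd 3 (insert {2,1} {{0::7,1},{0,2}})" unfolding insert_commute[of "2::7" "1" "{}"] by (rule f_1_2)
  have f_0_3: "nd 3 (insert {0,3} {{0::7,1},{0,2}})"
  proof (rule nd_perm[OF bij_sel7[of 0 1 2 3 4 5 6 0 1 2 3 4 5 6]])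
    show "\<forall>x. sel7 (sel7 x 0 1 2 3 4 5 6) 0 1 2 3 4 5 6 = x" by (simp add: all7)
    have "(`) (\<lambda>z::7. sel7 z 0 1 2 3 4 5 (6::7)) ` (insert {0,3} {{0::7,1},{0,2}}) = {{0::7,3},{0,1},{0,2}}" by simp
    also have "\<dots> = {{0::7,1},{0,2},{0,3}}" by (simp only: insert_commute)
    finally show "nd 3 ((`) (\<lambda>z::7. sel7 z 0 1 2 3 4 5 (6::7)) ` (insert {0,3} {{0::7,1},{0,2}}))" by (simp only: nd4)
  qed
  have f_0_3': "nd 3 (insert {3,0} {{0::7,1},{0,2}})" unfolding insert_commute[of "3::7" "0" "{}"] by (rule f_0_3)
  have f_1_3: "nd 3 (insert {1,3} {{0::7,1},{0,2}})"
  proof (rule nd_perm[OF bij_sel7[of 0 1 2 3 4 5 6 0 1 2 3 4 5 6]])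
    show "\<forall>x. sel7 (sel7 x 0 1 2 3 4 5 6) 0 1 2 3 4 5 6 = x" by (simp add: all7)
    have "(`) (\<lambda>z::7. sel7 z 0 1 2 3 4 5 (6::7)) ` (insert {1,3} {{0::7,1},{0,2}}) = {{1::7,3},{0,1},{0,2}}" by simp
    also have "\<dots> = {{0::7,1},{0,2},{1,3}}" by (simp only: insert_commute)
    finally show "nd 3 ((`) (\<lambda>z::7. sel7 z 0 1 2 3 4 5 (6::7)) ` (insert {1,3} {{0::7,1},{0,2}}))" by (simp only: nd6)
  qed
  have f_1_3': "nd 3 (insert {3,1} {{0::7,1},{0,2}})" unfolding insert_commute[of "3::7" "1" "{}"] by (rule f_1_3)
  have f_2_3: "nd 3 (insert {2,3} {{0::7,1},{0,2}})"
  proof (rule nd_perm[OF bij_sel7[of 0 2 1 3 4 5 6 0 2 1 3 4 5 6]])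
    show "\<forall>x. sel7 (sel7 x 0 2 1 3 4 5 6) 0 2 1 3 4 5 6 = x" by (simp add: all7)
    have "(`) (\<lambda>z::7. sel7 z 0 2 1 3 4 5 (6::7)) ` (insert {2,3} {{0::7,1},{0,2}}) = {{1::7,3},{0,2},{0,1}}" by simp
    also have "\<dots> = {{0::7,1},{0,2},{1,3}}" by (simp only: insert_commute)
    finally show "nd 3 ((`) (\<lambda>z::7. sel7 z 0 2 1 3 4 5 (6::7)) ` (insert {2,3} {{0::7,1},{0,2}}))" by (simp only: nd6)
  qed
  have f_2_3': "nd 3 (insert {3,2} {{0::7,1},{0,2}})" unfolding insert_commute[of "3::7" "2" "{}"] by (rule f_2_3)
  have f_3_4: "nd 3 (insert {3,4} {{0::7,1},{0,2}})"
  proof (rule nd_perm[OF bij_sel7[of 0 1 2 3 4 5 6 0 1 2 3 4 5 6]])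
    show "\<forall>x. sel7 (sel7 x 0 1 2 3 4 5 6) 0 1 2 3 4 5 6 = x" by (simp add: all7)
    have "(`) (\<lambda>z::7. sel7 z 0 1 2 3 4 5 (6::7)) ` (insert {3,4} {{0::7,1},{0,2}}) = {{3::7,4},{0,1},{0,2}}" by simp
    also have "\<dots> = {{0::7,1},{0,2},{3,4}}" by (simp only: insert_commute)
    finally show "nd 3 ((`) (\<lambda>z::7. sel7 z 0 1 2 3 4 5 (6::7)) ` (insert {3,4} {{0::7,1},{0,2}}))" by (simp only: nd7)
  qed
  have f_3_4': "nd 3 (insert {4,3} {{0::7,1},{0,2}})" unfolding insert_commute[of "4::7" "3" "{}"] by (rule f_3_4)
  show "nd 3 (insert {a,b} {{0::7,1},{0,2}})"
  proof (cases "a \<in> ({0,1,2}::7 set)")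
    case aV: True
    show ?thesis
    proof (cases "b \<in> ({0,1,2}::7 set)")
      case bV: True
      from aV bV ab show ?thesis by (elim insertE emptyE) (simp_all add: f_1_2 f_1_2' f_0_3 f_0_3' f_1_3 f_1_3' f_2_3 f_2_3' f_3_4 f_3_4' doubleton_eq_iff)
    next
      case bV: False
      have X: "nd 3 (insert {a,3} {{0::7,1},{0,2}})" using aV by (elim insertE emptyE) (simp_all add: f_1_2 f_1_2' f_0_3 f_0_3' f_1_3 f_1_3' f_2_3 f_2_3' f_3_4 f_3_4')
      show ?thesis by (rule nd_new1[OF KV aV bV _ X]) simp
    qed
  next
    case aV: False
    show ?thesis
    proof (cases "b \<in> ({0,1,2}::7 set)")
      case bV: True
      have X: "nd 3 (insert {b,3} {{0::7,1},{0,2}})" using bV by (elim insertE emptyE) (simp_all add: f_1_2 f_1_2' f_0_3 f_0_3' f_1_3 f_1_3' f_2_3 f_2_3' f_3_4 f_3_4')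
      have "nd 3 (insert {b,a} {{0::7,1},{0,2}})" by (rule nd_new1[OF KV bV aV _ X]) simp
      then show ?thesis by (simp add: insert_commute)
    next
      case bV: False
      show ?thesis by (rule nd_new2[OF KV aV bV ab(1) _ _ _ f_3_4]) simp_all
    qed
  qed
qed

lemma nd3: "nd 2 {{0::7,1},{2,3}}"
proof (rule nd_intro_2)
  show "good {{0::7,1},{2,3}}" by (rule good3)
next
  fix a b :: 7
  assume ab: "a \<noteq> b" "{a,b} \<notin> {{0::7,1},{2,3}}"
  have KV: "\<forall>e\<in>{{0::7,1},{2,3}}. e \<subseteq> ({0,1,2,3}::7 set)" by simp
  have f_0_2: "nd 3 (insert {0,2} {{0::7,1},{2,3}})"
  proof (rule nd_perm[OF bij_sel7[of 0 2 1 3 4 5 6 0 2 1 3 4 5 6]])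
    show "\<forall>x. sel7 (sel7 x 0 2 1 3 4 5 6) 0 2 1 3 4 5 6 = x" by (simp add: all7)
    have "(`) (\<lambda>z::7. sel7 z 0 2 1 3 4 5 (6::7)) ` (insert {0,2} {{0::7,1},{2,3}}) = {{0::7,1},{0,2},{1,3}}" by simp
    then show "nd 3 ((`) (\<lambda>z::7. sel7 z 0 2 1 3 4 5 (6::7)) ` (insert {0,2} {{0::7,1},{2,3}}))" by (simp only: nd6)
  qed
  have f_0_2': "nd 3 (insert {2,0} {{0::7,1},{2,3}})" unfolding insert_commute[of "2::7" "0" "{}"] by (rule f_0_2)
  have f_0_3: "nd 3 (insert {0,3} {{0::7,1},{2,3}})"
  proof (rule nd_perm[OF bij_sel7[of 0 2 3 1 4 5 6 0 3 1 2 4 5 6]])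
    show "\<forall>x. sel7 (sel7 x 0 2 3 1 4 5 6) 0 3 1 2 4 5 6 = x" by (simp add: all7)
    have "(`) (\<lambda>z::7. sel7 z 0 2 3 1 4 5 (6::7)) ` (insert {0,3} {{0::7,1},{2,3}}) = {{0::7,1},{0,2},{3,1}}" by simp
    also have "\<dots> = {{0::7,1},{0,2},{1,3}}" by (simp only: insert_commute)
    finally show "nd 3 ((`) (\<lambda>z::7. sel7 z 0 2 3 1 4 5 (6::7)) ` (insert {0,3} {{0::7,1},{2,3}}))" by (simp only: nd6)
  qed
  have f_0_3': "nd 3 (insert {3,0} {{0::7,1},{2,3}})" unfolding insert_commute[of "3::7" "0" "{}"] by (rule f_0_3)
  have f_1_2: "nd 3 (insert {1,2} {{0::7,1},{2,3}})"
  proof (rule nd_perm[OF bij_sel7[of 2 0 1 3 4 5 6 1 2 0 3 4 5 6]])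
    show "\<forall>x. sel7 (sel7 x 2 0 1 3 4 5 6) 1 2 0 3 4 5 6 = x" by (simp add: all7)
    have "(`) (\<lambda>z::7. sel7 z 2 0 1 3 4 5 (6::7)) ` (insert {1,2} {{0::7,1},{2,3}}) = {{0::7,1},{2,0},{1,3}}" by simp
    also have "\<dots> = {{0::7,1},{0,2},{1,3}}" by (simp only: insert_commute)
    finally show "nd 3 ((`) (\<lambda>z::7. sel7 z 2 0 1 3 4 5 (6::7)) ` (insert {1,2} {{0::7,1},{2,3}}))" by (simp only: nd6)
  qed
  have f_1_2': "nd 3 (insert {2,1} {{0::7,1},{2,3}})" unfolding insert_commute[of "2::7" "1" "{}"] by (rule f_1_2)
  have f_1_3: "nd 3 (insert {1,3} {{0::7,1},{2,3}})"
  proof (rule nd_perm[OF bij_sel7[of 2 0 3 1 4 5 6 1 3 0 2 4 5 6]])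
    show "\<forall>x. sel7 (sel7 x 2 0 3 1 4 5 6) 1 3 0 2 4 5 6 = x" by (simp add: all7)
    have "(`) (\<lambda>z::7. sel7 z 2 0 3 1 4 5 (6::7)) ` (insert {1,3} {{0::7,1},{2,3}}) = {{0::7,1},{2,0},{3,1}}" by simp
    also have "\<dots> = {{0::7,1},{0,2},{1,3}}" by (simp only: insert_commute)
    finally show "nd 3 ((`) (\<lambda>z::7. sel7 z 2 0 3 1 4 5 (6::7)) ` (insert {1,3} {{0::7,1},{2,3}}))" by (simp only: nd6)
  qed
  have f_1_3': "nd 3 (insert {3,1} {{0::7,1},{2,3}})" unfolding insert_commute[of "3::7" "1" "{}"] by (rule f_1_3)
  have f_0_4: "nd 3 (insert {0,4} {{0::7,1},{2,3}})"
  proof (rule nd_perm[OF bij_sel7[of 0 1 3 4 2 5 6 0 1 4 2 3 5 6]])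
    show "\<forall>x. sel7 (sel7 x 0 1 3 4 2 5 6) 0 1 4 2 3 5 6 = x" by (simp add: all7)
    have "(`) (\<lambda>z::7. sel7 z 0 1 3 4 2 5 (6::7)) ` (insert {0,4} {{0::7,1},{2,3}}) = {{0::7,2},{0,1},{3,4}}" by simp
    also have "\<dots> = {{0::7,1},{0,2},{3,4}}" by (simp only: insert_commute)
    finally show "nd 3 ((`) (\<lambda>z::7. sel7 z 0 1 3 4 2 5 (6::7)) ` (insert {0,4} {{0::7,1},{2,3}}))" by (simp only: nd7)
  qed
  have f_0_4': "nd 3 (insert {4,0} {{0::7,1},{2,3}})" unfolding insert_commute[of "4::7" "0" "{}"] by (rule f_0_4)
  have f_1_4: "nd 3 (insert {1,4} {{0::7,1},{2,3}})"
  proof (rule nd_perm[OF bij_sel7[of 1 0 3 4 2 5 6 1 0 4 2 3 5 6]])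
    show "\<forall>x. sel7 (sel7 x 1 0 3 4 2 5 6) 1 0 4 2 3 5 6 = x" by (simp add: all7)
    have "(`) (\<lambda>z::7. sel7 z 1 0 3 4 2 5 (6::7)) ` (insert {1,4} {{0::7,1},{2,3}}) = {{0::7,2},{1,0},{3,4}}" by simp
    also have "\<dots> = {{0::7,1},{0,2},{3,4}}" by (simp only: insert_commute)
    finally show "nd 3 ((`) (\<lambda>z::7. sel7 z 1 0 3 4 2 5 (6::7)) ` (insert {1,4} {{0::7,1},{2,3}}))" by (simp only: nd7)
  qed
  have f_1_4': "nd 3 (insert {4,1} {{0::7,1},{2,3}})" unfolding insert_commute[of "4::7" "1" "{}"] by (rule f_1_4)
  have f_2_4: "nd 3 (insert {2,4} {{0::7,1},{2,3}})"
  proof (rule nd_perm[OF bij_sel7[of 3 4 0 1 2 5 6 2 3 4 0 1 5 6]])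
    show "\<forall>x. sel7 (sel7 x 3 4 0 1 2 5 6) 2 3 4 0 1 5 6 = x" by (simp add: all7)
    have "(`) (\<lambda>z::7. sel7 z 3 4 0 1 2 5 (6::7)) ` (insert {2,4} {{0::7,1},{2,3}}) = {{0::7,2},{3,4},{0,1}}" by simp
    also have "\<dots> = {{0::7,1},{0,2},{3,4}}" by (simp only: insert_commute)
    finally show "nd 3 ((`) (\<lambda>z::7. sel7 z 3 4 0 1 2 5 (6::7)) ` (insert {2,4} {{0::7,1},{2,3}}))" by (simp only: nd7)
  qed
  have f_2_4': "nd 3 (insert {4,2} {{0::7,1},{2,3}})" unfolding insert_commute[of "4::7" "2" "{}"] by (rule f_2_4)
  have f_3_4: "nd 3 (insert {3,4} {{0::7,1},{2,3}})"
  proof (rule nd_perm[OF bij_sel7[of 3 4 1 0 2 5 6 3 2 4 0 1 5 6]])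
    show "\<forall>x. sel7 (sel7 x 3 4 1 0 2 5 6) 3 2 4 0 1 5 6 = x" by (simp add: all7)
    have "(`) (\<lambda>z::7. sel7 z 3 4 1 0 2 5 (6::7)) ` (insert {3,4} {{0::7,1},{2,3}}) = {{0::7,2},{3,4},{1,0}}" by simp
    also have "\<dots> = {{0::7,1},{0,2},{3,4}}" by (simp only: insert_commute)
    finally show "nd 3 ((`) (\<lambda>z::7. sel7 z 3 4 1 0 2 5 (6::7)) ` (insert {3,4} {{0::7,1},{2,3}}))" by (simp only: nd7)
  qed
  have f_3_4': "nd 3 (insert {4,3} {{0::7,1},{2,3}})" unfolding insert_commute[of "4::7" "3" "{}"] by (rule f_3_4)
  have f_4_5: "nd 3 (insert {4,5} {{0::7,1},{2,3}})"
  proof (rule nd_perm[OF bij_sel7[of 0 1 2 3 4 5 6 0 1 2 3 4 5 6]])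
    show "\<forall>x. sel7 (sel7 x 0 1 2 3 4 5 6) 0 1 2 3 4 5 6 = x" by (simp add: all7)
    have "(`) (\<lambda>z::7. sel7 z 0 1 2 3 4 5 (6::7)) ` (insert {4,5} {{0::7,1},{2,3}}) = {{4::7,5},{0,1},{2,3}}" by simp
    also have "\<dots> = {{0::7,1},{2,3},{4,5}}" by (simp only: insert_commute)
    finally show "nd 3 ((`) (\<lambda>z::7. sel7 z 0 1 2 3 4 5 (6::7)) ` (insert {4,5} {{0::7,1},{2,3}}))" by (simp only: nd8)
  qed
  have f_4_5': "nd 3 (insert {5,4} {{0::7,1},{2,3}})" unfolding insert_commute[of "5::7" "4" "{}"] by (rule f_4_5)
  show "nd 3 (insert {a,b} {{0::7,1},{2,3}})"
  proof (cases "a \<in> ({0,1,2,3}::7 set)")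
    case aV: True
    show ?thesis
    proof (cases "b \<in> ({0,1,2,3}::7 set)")
      case bV: True
      from aV bV ab show ?thesis by (elim insertE emptyE) (simp_all add: f_0_2 f_0_2' f_0_3 f_0_3' f_1_2 f_1_2' f_1_3 f_1_3' f_0_4 f_0_4' f_1_4 f_1_4' f_2_4 f_2_4' f_3_4 f_3_4' f_4_5 f_4_5' doubleton_eq_iff)
    next
      case bV: False
      have X: "nd 3 (insert {a,4} {{0::7,1},{2,3}})" using aV by (elim insertE emptyE) (simp_all add: f_0_2 f_0_2' f_0_3 f_0_3' f_1_2 f_1_2' f_1_3 f_1_3' f_0_4 f_0_4' f_1_4 f_1_4' f_2_4 f_2_4' f_3_4 f_3_4' f_4_5 f_4_5')
      show ?thesis by (rule nd_new1[OF KV aV bV _ X]) simp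
    qed
  next
    case aV: False
    show ?thesis
    proof (cases "b \<in> ({0,1,2,3}::7 set)")
      case bV: True
      have X: "nd 3 (insert {b,4} {{0::7,1},{2,3}})" using bV by (elim insertE emptyE) (simp_all add: f_0_2 f_0_2' f_0_3 f_0_3' f_1_2 f_1_2' f_1_3 f_1_3' f_0_4 f_0_4' f_1_4 f_1_4' f_2_4 f_2_4' f_3_4 f_3_4' f_4_5 f_4_5')
      have "nd 3 (insert {b,a} {{0::7,1},{2,3}})" by (rule nd_new1[OF KV bV aV _ X]) simp
      then show ?thesis by (simp add: insert_commute)
    next
      case bV: False
      show ?thesis by (rule nd_new2[OF KV aV bV ab(1) _ _ _ f_4_5]) simp_all
    qed
  qed
qed

lemma nd1: "nd 1 {{0::7,1}}"
proof (rule nd_intro_1)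
  show "good {{0::7,1}}" by (rule good1)
next
  fix a b :: 7
  assume ab: "a \<noteq> b" "{a,b} \<notin> {{0::7,1}}"
  have KV: "\<forall>e\<in>{{0::7,1}}. e \<subseteq> ({0,1}::7 set)" by simp
  have f_0_2: "nd 2 (insert {0,2} {{0::7,1}})"
  proof (rule nd_perm[OF bij_sel7[of 0 1 2 3 4 5 6 0 1 2 3 4 5 6]])
    show "\<forall>x. sel7 (sel7 x 0 1 2 3 4 5 6) 0 1 2 3 4 5 6 = x" by (simp add: all7)
    have "(`) (\<lambda>z::7. sel7 z 0 1 2 3 4 5 (6::7)) ` (insert {0,2} {{0::7,1}}) = {{0::7,2},{0,1}}" by simp
    also have "\<dots> = {{0::7,1},{0,2}}" by (simp only: insert_commute)
    finally show "nd 2 ((`) (\<lambda>z::7. sel7 z 0 1 2 3 4 5 (6::7)) ` (insert {0,2} {{0::7,1}}))" by (simp only: nd2)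
  qed
  have f_0_2': "nd 2 (insert {2,0} {{0::7,1}})" unfolding insert_commute[of "2::7" "0" "{}"] by (rule f_0_2)
  have f_1_2: "nd 2 (insert {1,2} {{0::7,1}})"
  proof (rule nd_perm[OF bij_sel7[of 1 0 2 3 4 5 6 1 0 2 3 4 5 6]])
    show "\<forall>x. sel7 (sel7 x 1 0 2 3 4 5 6) 1 0 2 3 4 5 6 = x" by (simp add: all7)
    have "(`) (\<lambda>z::7. sel7 z 1 0 2 3 4 5 (6::7)) ` (insert {1,2} {{0::7,1}}) = {{0::7,2},{1,0}}" by simp
    also have "\<dots> = {{0::7,1},{0,2}}" by (simp only: insert_commute)
    finally show "nd 2 ((`) (\<lambda>z::7. sel7 z 1 0 2 3 4 5 (6::7)) ` (insert {1,2} {{0::7,1}}))" by (simp only: nd2)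
  qed
  have f_1_2': "nd 2 (insert {2,1} {{0::7,1}})" unfolding insert_commute[of "2::7" "1" "{}"] by (rule f_1_2)
  have f_2_3: "nd 2 (insert {2,3} {{0::7,1}})"
  proof (rule nd_perm[OF bij_sel7[of 0 1 2 3 4 5 6 0 1 2 3 4 5 6]])
    show "\<forall>x. sel7 (sel7 x 0 1 2 3 4 5 6) 0 1 2 3 4 5 6 = x" by (simp add: all7)
    have "(`) (\<lambda>z::7. sel7 z 0 1 2 3 4 5 (6::7)) ` (insert {2,3} {{0::7,1}}) = {{2::7,3},{0,1}}" by simp
    also have "\<dots> = {{0::7,1},{2,3}}" by (simp only: insert_commute)
    finally show "nd 2 ((`) (\<lambda>z::7. sel7 z 0 1 2 3 4 5 (6::7)) ` (insert {2,3} {{0::7,1}}))" by (simp only: nd3)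
  qed
  have f_2_3': "nd 2 (insert {3,2} {{0::7,1}})" unfolding insert_commute[of "3::7" "2" "{}"] by (rule f_2_3)
  show "nd 2 (insert {a,b} {{0::7,1}})"
  proof (cases "a \<in> ({0,1}::7 set)")
    case aV: True
    show ?thesis
    proof (cases "b \<in> ({0,1}::7 set)")
      case bV: True
      from aV bV ab show ?thesis by (elim insertE emptyE) (simp_all add: f_0_2 f_0_2' f_1_2 f_1_2' f_2_3 f_2_3' doubleton_eq_iff)
    next
      case bV: False
      have X: "nd 2 (insert {a,2} {{0::7,1}})" using aV by (elim insertE emptyE) (simp_all add: f_0_2 f_0_2' f_1_2 f_1_2' f_2_3 f_2_3')
      show ?thesis by (rule nd_new1[OF KV aV bV _ X]) simp
    qed
  next
    case aV: False
    show ?thesis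
    proof (cases "b \<in> ({0,1}::7 set)")
      case bV: True
      have X: "nd 2 (insert {b,2} {{0::7,1}})" using bV by (elim insertE emptyE) (simp_all add: f_0_2 f_0_2' f_1_2 f_1_2' f_2_3 f_2_3')
      have "nd 2 (insert {b,a} {{0::7,1}})" by (rule nd_new1[OF KV bV aV _ X]) simp
      then show ?thesis by (simp add: insert_commute)
    next
      case bV: False
      show ?thesis by (rule nd_new2[OF KV aV bV ab(1) _ _ _ f_2_3]) simp_all
    qed
  qed
qed

lemma nd0: "nd 0 ({}::7 set set)"
proof (rule nd_intro_0)
  show "good ({}::7 set set)" by (rule good0)
next
  fix a b :: 7
  assume ab: "a \<noteq> b" "{a,b} \<notin> ({}::7 set set)"
  have KV: "\<forall>e\<in>({}::7 set set). e \<subseteq> ({}::7 set)" by simp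
  have f_0_1: "nd 1 (insert {0,1} ({}::7 set set))"
  proof (rule nd_perm[OF bij_sel7[of 0 1 2 3 4 5 6 0 1 2 3 4 5 6]])
    show "\<forall>x. sel7 (sel7 x 0 1 2 3 4 5 6) 0 1 2 3 4 5 6 = x" by (simp add: all7)
    have "(`) (\<lambda>z::7. sel7 z 0 1 2 3 4 5 (6::7)) ` (insert {0,1} ({}::7 set set)) = {{0::7,1}}" by simp
    then show "nd 1 ((`) (\<lambda>z::7. sel7 z 0 1 2 3 4 5 (6::7)) ` (insert {0,1} ({}::7 set set)))" by (simp only: nd1)
  qed
  have f_0_1': "nd 1 (insert {1,0} ({}::7 set set))" unfolding insert_commute[of "1::7" "0" "{}"] by (rule f_0_1)
  show "nd 1 (insert {a,b} ({}::7 set set))"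
  proof (cases "a \<in> ({}::7 set)")
    case aV: True
    then show ?thesis by simp
  next
    case aV: False
    show ?thesis
    proof (cases "b \<in> ({}::7 set)")
      case bV: True
      then show ?thesis by simp
    next
      case bV: False
      show ?thesis by (rule nd_new2[OF KV aV bV ab(1) _ _ _ f_0_1]) simp_all
    qed
  qed
qed

lemma edge_exists:
  assumes "card (H::7 set set) \<le> 4"
  shows "\<exists>i j. i \<noteq> j \<and> {i,j} \<notin> H"
proof (rule ccontr)
  assume "\<not> ?thesis"
  then have h: "\<And>i j. i \<noteq> j \<Longrightarrow> {i,j} \<in> H" by blast
  have "{{0::7,1},{0,2},{0,3},{0,4},{0,5},{0,6}} \<subseteq> H"
    using h[of 0 1] h[of 0 2] h[of 0 3] h[of 0 4] h[of 0 5] h[of 0 6] by simp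
  then have "card {{0::7,1},{0,2},{0,3},{0,4},{0,5},{0,6}} \<le> card H" by (rule card_mono[rotated]) simp
  moreover have "card {{0::7,1},{0,2},{0,3},{0,4},{0,5},{0,6}} = 6" by (simp add: doubleton_eq_iff)
  ultimately show False using assms by simp
qed

theorem mainTheorem18:
  fixes H :: "(7 set) set"
  assumes "H \<subseteq> simple_edges"
    and "card H \<le> 4"
  shows "q_graph (complete_minus H) = 2"
proof -
  have g: "good H" using nd0[unfolded nd_def] assms by auto
  obtain A where A: "A \<in> S_graph (complete_minus H)" "card (eigenvalues A) = 2"
    using g unfolding good_def by blast
  show ?thesis unfolding q_graph_def
  proof (rule Least_equality)
    show "\<exists>A\<in>S_graph (complete_minus H). card (eigenvalues A) = 2" using A by blast
  next
    fix k assume "\<exists>A\<in>S_graph (complete_minus H). card (eigenvalues A) = k"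
    then obtain B where B: "B \<in> S_graph (complete_minus H)" "card (eigenvalues B) = k" by blast
    obtain i j where ij: "i \<noteq> j" "{i,j} \<notin> H" using edge_exists[OF assms(2)] by blast
    have "transpose B = B" "B$i$j \<noteq> 0" using B(1) ij unfolding S_cm by auto
    then have "2 \<le> card (eigenvalues B)" using two_eig_lb ij(1) by blast
    then show "2 \<le> k" using B(2) by simp
  qed
qed

end
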